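(* Let $(M^4,g,I,J)$ be a nondegenerate generalized Kähler four-manifold with angle function $p$ and Lee form $\theta=\theta_I$. Then (1) $\langle dp,\theta\rangle_g=0$; (2) $|\theta|_g^2=\dfrac{|dp|_g^2}{1-p^2}$.
   Context: Generalized Kähler (GK) structure: $I,J$ are integrable complex structures and $g$ is Hermitian for both. With $\omega_I(X,Y)=g(X,IY)$ and $\omega_J(X,Y)=g(X,JY)$, one has $d^c_I\omega_I=H=-d^c_J\omega_J$ and $dH=0$, where $d^c=\sqrt{-1}(\bar\partial-\partial)$. The Lee form $\theta=\theta_I$ is defined by $d\omega_I=\theta\wedge\omega_I$. The angle function is $p=\frac14\operatorname{tr}(IJ)$. Nondegenerate means $g^{-1}[I,J]$ is nondegenerate; in dimension $4$ this is equivalent to $I,J$ inducing the same orientation with $|p|<1$. *)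

theory Defs
  imports "HOL-Analysis.Analysis"
begin

text \<open>Local coordinate model: tensor fields on an open set U of R^4 (a coordinate
chart of the 4-manifold).  Vectors are real^4, endomorphism fields are matrices
A x $ k $ j = A^k_j acting by A *v X; the metric is the matrix g_ij;
2-forms are antisymmetric matrices om_ij; 3- and 4-forms are component functions.
Forms are evaluated on coordinate vectors (no 1/k! factors), i.e. the
determinant convention for wedge products and the invariant formula for d.\<close>

type_synonym pt = "real^4"

definition pd :: "(pt \<Rightarrow> real) \<Rightarrow> 4 \<Rightarrow> pt \<Rightarrow> real" where
  "pd f i x = frechet_derivative f (at x) (axis i 1)"

fun pds :: "4 list \<Rightarrow> (pt \<Rightarrow> real) \<Rightarrow> pt \<Rightarrow> real" where
  "pds [] f = f"
| "pds (k # ks) f = pd (pds ks f) k"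

definition smooth_fun :: "pt set \<Rightarrow> (pt \<Rightarrow> real) \<Rightarrow> bool" where
  "smooth_fun U f \<longleftrightarrow> (\<forall>ks. \<forall>x\<in>U. pds ks f differentiable (at x))"

definition smooth_mat :: "pt set \<Rightarrow> (pt \<Rightarrow> real^4^4) \<Rightarrow> bool" where
  "smooth_mat U A \<longleftrightarrow> (\<forall>i j. smooth_fun U (\<lambda>x. A x $ i $ j))"

definition smooth_3form :: "pt set \<Rightarrow> (pt \<Rightarrow> 4 \<Rightarrow> 4 \<Rightarrow> 4 \<Rightarrow> real) \<Rightarrow> bool" where
  "smooth_3form U H \<longleftrightarrow> (\<forall>i j k. smooth_fun U (\<lambda>x. H x i j k))"

definition nijenhuis :: "(pt \<Rightarrow> real^4^4) \<Rightarrow> pt \<Rightarrow> 4 \<Rightarrow> 4 \<Rightarrow> 4 \<Rightarrow> real" where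
  "nijenhuis A x i j k =
     (\<Sum>l\<in>UNIV. A x $ l $ i * pd (\<lambda>y. A y $ k $ j) l x
              - A x $ l $ j * pd (\<lambda>y. A y $ k $ i) l x
              - A x $ k $ l * (pd (\<lambda>y. A y $ l $ j) i x - pd (\<lambda>y. A y $ l $ i) j x))"

definition complex_structure :: "pt set \<Rightarrow> (pt \<Rightarrow> real^4^4) \<Rightarrow> bool" where
  "complex_structure U A \<longleftrightarrow> smooth_mat U A \<and>
     (\<forall>x\<in>U. A x ** A x = - mat 1) \<and>
     (\<forall>x\<in>U. \<forall>i j k. nijenhuis A x i j k = 0)"

definition riemannian_metric :: "pt set \<Rightarrow> (pt \<Rightarrow> real^4^4) \<Rightarrow> bool" where
  "riemannian_metric U g \<longleftrightarrow> smooth_mat U g \<and>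
     (\<forall>x\<in>U. transpose (g x) = g x \<and> (\<forall>v. v \<noteq> 0 \<longrightarrow> v \<bullet> (g x *v v) > 0))"

definition hermitian :: "pt set \<Rightarrow> (pt \<Rightarrow> real^4^4) \<Rightarrow> (pt \<Rightarrow> real^4^4) \<Rightarrow> bool" where
  "hermitian U g A \<longleftrightarrow> (\<forall>x\<in>U. transpose (A x) ** g x ** A x = g x)"

text \<open>Fundamental form omega_A(X,Y) = g(X,AY), components (g A)_ij.\<close>
definition fund_form :: "(pt \<Rightarrow> real^4^4) \<Rightarrow> (pt \<Rightarrow> real^4^4) \<Rightarrow> pt \<Rightarrow> real^4^4" where
  "fund_form g A x = g x ** A x"

definition d2 :: "(pt \<Rightarrow> real^4^4) \<Rightarrow> pt \<Rightarrow> 4 \<Rightarrow> 4 \<Rightarrow> 4 \<Rightarrow> real" where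
  "d2 om x i j k = pd (\<lambda>y. om y $ j $ k) i x + pd (\<lambda>y. om y $ k $ i) j x
                 + pd (\<lambda>y. om y $ i $ j) k x"

definition d3 :: "(pt \<Rightarrow> 4 \<Rightarrow> 4 \<Rightarrow> 4 \<Rightarrow> real) \<Rightarrow> pt \<Rightarrow> 4 \<Rightarrow> 4 \<Rightarrow> 4 \<Rightarrow> 4 \<Rightarrow> real" where
  "d3 H x i j k l = pd (\<lambda>y. H y j k l) i x - pd (\<lambda>y. H y i k l) j x
                  + pd (\<lambda>y. H y i j l) k x - pd (\<lambda>y. H y i j k) l x"

text \<open>d^c = A^{-1} d A acting on a 2-form om with A om = om (om(AX,AY)=om(X,Y)):
 (d^c om)(X,Y,Z) = - (d om)(AX,AY,AZ).  (Here d^c = sqrt(-1)(dbar - d).)\<close>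
definition dc2 :: "(pt \<Rightarrow> real^4^4) \<Rightarrow> (pt \<Rightarrow> real^4^4) \<Rightarrow> pt \<Rightarrow> 4 \<Rightarrow> 4 \<Rightarrow> 4 \<Rightarrow> real" where
  "dc2 A om x i j k = - (\<Sum>a\<in>UNIV. \<Sum>b\<in>UNIV. \<Sum>c\<in>UNIV.
        d2 om x a b c * A x $ a $ i * A x $ b $ j * A x $ c $ k)"

definition wedge12 :: "real^4 \<Rightarrow> real^4^4 \<Rightarrow> 4 \<Rightarrow> 4 \<Rightarrow> 4 \<Rightarrow> real" where
  "wedge12 th om i j k = th $ i * om $ j $ k + th $ j * om $ k $ i + th $ k * om $ i $ j"

definition generalized_kaehler :: "pt set \<Rightarrow> (pt \<Rightarrow> real^4^4) \<Rightarrow> (pt \<Rightarrow> real^4^4)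
   \<Rightarrow> (pt \<Rightarrow> real^4^4) \<Rightarrow> bool" where
  "generalized_kaehler U g I J \<longleftrightarrow>
     riemannian_metric U g \<and> complex_structure U I \<and> complex_structure U J \<and>
     hermitian U g I \<and> hermitian U g J \<and>
     (\<exists>H. smooth_3form U H \<and>
        (\<forall>x\<in>U. \<forall>i j k. dc2 I (fund_form g I) x i j k = H x i j k) \<and>
        (\<forall>x\<in>U. \<forall>i j k. H x i j k = - dc2 J (fund_form g J) x i j k) \<and>
        (\<forall>x\<in>U. \<forall>i j k l. d3 H x i j k l = 0))"

text \<open>Nondegenerate: g^{-1}[I,J] nondegenerate, i.e. [I,J] invertible at every point.\<close>
definition nondegenerate :: "pt set \<Rightarrow> (pt \<Rightarrow> real^4^4) \<Rightarrow> (pt \<Rightarrow> real^4^4) \<Rightarrow> bool" where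
  "nondegenerate U I J \<longleftrightarrow> (\<forall>x\<in>U. det (I x ** J x - J x ** I x) \<noteq> 0)"

definition angle :: "(pt \<Rightarrow> real^4^4) \<Rightarrow> (pt \<Rightarrow> real^4^4) \<Rightarrow> pt \<Rightarrow> real" where
  "angle I J x = trace (I x ** J x) / 4"

definition dfun :: "(pt \<Rightarrow> real) \<Rightarrow> pt \<Rightarrow> real^4" where
  "dfun f x = (\<chi> i. pd f i x)"

text \<open>Metric pairing of 1-forms: g^{ij} a_i b_j.\<close>
definition inner_g :: "real^4^4 \<Rightarrow> real^4 \<Rightarrow> real^4 \<Rightarrow> real" where
  "inner_g G a b = a \<bullet> (matrix_inv G *v b)"

end

theory Submission
  imports Defs
begin


lemma mm_neg_r: "(A::real^'n^'m) ** (- B) = - (A ** B)"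
  by (simp add: vec_eq_iff matrix_matrix_mult_def sum_negf)
lemma mm_neg_l: "(- A::real^'n^'m) ** B = - (A ** B)"
  by (simp add: vec_eq_iff matrix_matrix_mult_def sum_negf)
lemma mm_add_r: "(A::real^'n^'m) ** (B + C) = A ** B + A ** C"
  by (simp add: vec_eq_iff matrix_matrix_mult_def sum.distrib distrib_left)
lemma mm_add_l: "((A::real^'n^'m) + B) ** C = A ** C + B ** C"
  by (simp add: vec_eq_iff matrix_matrix_mult_def sum.distrib distrib_right)
lemma mm_diff_r: "(A::real^'n^'m) ** (B - C) = A ** B - A ** C"
  by (simp add: vec_eq_iff matrix_matrix_mult_def sum_subtractf right_diff_distrib)
lemma mm_diff_l: "((A::real^'n^'m) - B) ** C = A ** C - B ** C"
  by (simp add: vec_eq_iff matrix_matrix_mult_def sum_subtractf left_diff_distrib)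
lemma mm_scale_r: "(A::real^'n^'m) ** (c *\<^sub>R B) = c *\<^sub>R (A ** B)"
  by (simp add: vec_eq_iff matrix_matrix_mult_def sum_distrib_left algebra_simps)
lemma mm_scale_l: "(c *\<^sub>R (A::real^'n^'m)) ** B = c *\<^sub>R (A ** B)"
  by (simp add: vec_eq_iff matrix_matrix_mult_def sum_distrib_left algebra_simps)
lemma mm_zero_r: "(A::real^'n^'m) ** 0 = 0"
  by (simp add: vec_eq_iff matrix_matrix_mult_def)
lemma mm_zero_l: "(0::real^'n^'m) ** A = 0"
  by (simp add: vec_eq_iff matrix_matrix_mult_def)
lemma tr_add: "transpose ((A::real^'n^'m) + B) = transpose A + transpose B"
  by (simp add: vec_eq_iff transpose_def)
lemma tr_diff: "transpose ((A::real^'n^'m) - B) = transpose A - transpose B"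
  by (simp add: vec_eq_iff transpose_def)
lemma tr_neg: "transpose (- (A::real^'n^'m)) = - transpose A"
  by (simp add: vec_eq_iff transpose_def)
lemma tr_scale: "transpose (c *\<^sub>R (A::real^'n^'m)) = c *\<^sub>R transpose A"
  by (simp add: vec_eq_iff transpose_def)
lemma tr_zero: "transpose (0::real^'n^'m) = 0"
  by (simp add: vec_eq_iff transpose_def)
lemma trace_neg: "trace (- (A::real^'n^'n)) = - trace A"
  by (simp add: trace_def sum_negf)
lemma trace_scale: "trace (c *\<^sub>R (A::real^'n^'n)) = c * trace A"
  by (simp add: trace_def sum_distrib_left)
lemma mat1_scale: "mat 1 ** (A::real^'n^'n) = A" by simp

lemmas mm_simps = mm_neg_r mm_neg_l mm_add_r mm_add_l mm_diff_r mm_diff_l mm_scale_r mm_scale_l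
  mm_zero_r mm_zero_l tr_add tr_diff tr_neg tr_scale tr_zero matrix_transpose_mul

lemma skew_of_orth:
  fixes J :: "real^4^4"
  assumes "transpose J ** J = mat 1" "J ** J = - mat 1"
  shows "transpose J = - J"
proof -
  have "transpose J = transpose J ** (- (J ** J))" using assms(2) by simp
  also have "\<dots> = - ((transpose J ** J) ** J)" by (simp add: matrix_mul_assoc mm_neg_r)
  finally show ?thesis using assms(1) by simp
qed



definition I0 :: "real^4^4" where
  "I0 = (\<chi> i j. if (i=2 \<and> j=1) \<or> (i=4 \<and> j=3) then 1 else if (i=1 \<and> j=2) \<or> (i=3 \<and> j=4) then -1 else 0)"

lemma I0_entries:
  "I0$1$1 = 0" "I0$1$2 = -1" "I0$1$3 = 0" "I0$1$4 = 0"
  "I0$2$1 = 1" "I0$2$2 = 0" "I0$2$3 = 0" "I0$2$4 = 0"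
  "I0$3$1 = 0" "I0$3$2 = 0" "I0$3$3 = 0" "I0$3$4 = -1"
  "I0$4$1 = 0" "I0$4$2 = 0" "I0$4$3 = 1" "I0$4$4 = 0"
  by (simp_all add: I0_def)

definition Jn :: "real \<Rightarrow> real \<Rightarrow> real \<Rightarrow> real^4^4" where
  "Jn a b c = (\<chi> i j. if i=1 \<and> j=2 then a else if i=1 \<and> j=3 then b else if i=1 \<and> j=4 then c
     else if i=2 \<and> j=1 then -a else if i=2 \<and> j=3 then c else if i=2 \<and> j=4 then -b
     else if i=3 \<and> j=1 then -b else if i=3 \<and> j=2 then -c else if i=3 \<and> j=4 then a
     else if i=4 \<and> j=1 then -c else if i=4 \<and> j=2 then b else if i=4 \<and> j=3 then -a else 0)"

lemma Jn_entries:
  "Jn a b c$1$1 = 0" "Jn a b c$1$2 = a" "Jn a b c$1$3 = b" "Jn a b c$1$4 = c"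
  "Jn a b c$2$1 = -a" "Jn a b c$2$2 = 0" "Jn a b c$2$3 = c" "Jn a b c$2$4 = -b"
  "Jn a b c$3$1 = -b" "Jn a b c$3$2 = -c" "Jn a b c$3$3 = 0" "Jn a b c$3$4 = a"
  "Jn a b c$4$1 = -c" "Jn a b c$4$2 = b" "Jn a b c$4$3 = -a" "Jn a b c$4$4 = 0"
  by (simp_all add: Jn_def)

lemma mat_eq4: "(A::real^4^4) = B \<longleftrightarrow> (\<forall>i j. A$i$j = B$i$j)"
  by (simp add: vec_eq_iff)

lemma norm_J:
  fixes J :: "real^4^4"
  assumes o: "transpose J ** J = mat 1" and s: "J ** J = - mat 1"
    and d: "det (I0 ** J - J ** I0) \<noteq> 0"
  shows "J = Jn (J$1$2) (J$1$3) (J$1$4) \<and> (J$1$2)\<^sup>2 + (J$1$3)\<^sup>2 + (J$1$4)\<^sup>2 = 1"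
proof -
  have sk: "transpose J = - J" using skew_of_orth[OF o s] .
  have skij: "J$j$i = - J$i$j" for i j
  proof -
    have "transpose J $ i $ j = (- J) $ i $ j" using sk by simp
    thus ?thesis by (simp add: transpose_def)
  qed
  have dg: "J$i$i = 0" for i using skij[of i i] by simp
  define a where "a = J$1$2"
  define b where "b = J$1$3"
  define c where "c = J$1$4"
  define dd where "dd = J$2$3"
  define e where "e = J$2$4"
  define f where "f = J$3$4"
  have ent: "J$1$1 = 0" "J$1$2 = a" "J$1$3 = b" "J$1$4 = c"
    "J$2$1 = -a" "J$2$2 = 0" "J$2$3 = dd" "J$2$4 = e"
    "J$3$1 = -b" "J$3$2 = -dd" "J$3$3 = 0" "J$3$4 = f"
    "J$4$1 = -c" "J$4$2 = -e" "J$4$3 = -f" "J$4$4 = 0"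
    using skij[of 1 2] skij[of 1 3] skij[of 1 4] skij[of 2 3] skij[of 2 4] skij[of 3 4]
    by (simp_all add: a_def b_def c_def dd_def e_def f_def dg)
  have sq: "(J ** J)$i$j = (- mat 1 :: real^4^4)$i$j" for i j using s by simp
  have eqs: "a*a+b*b+c*c = 1" "a*a+dd*dd+e*e = 1" "b*b+dd*dd+f*f=1" "c*c+e*e+f*f=1"
     "b*dd + c*e = 0" "a*dd - c*f = 0" "a*e+b*f = 0" "a*b+e*f = 0" "a*c - dd*f = 0" "b*c+dd*e=0"
    using sq[of 1 1] sq[of 2 2] sq[of 3 3] sq[of 4 4] sq[of 1 2] sq[of 1 3] sq[of 1 4]
      sq[of 2 3] sq[of 2 4] sq[of 3 4]
    by (simp_all add: matrix_matrix_mult_def sum_4 ent mat_def algebra_simps)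
  have nz: "c + dd \<noteq> 0 \<or> b - e \<noteq> 0"
  proof (rule ccontr)
    assume "\<not> ?thesis"
    hence h: "c + dd = 0" "b - e = 0" by auto
    have "I0 ** J - J ** I0 = 0"
      unfolding mat_eq4
      apply (intro allI)
      subgoal for i j
        using exhaust_4[of i] exhaust_4[of j] h
        by (auto simp: matrix_matrix_mult_def sum_4 ent I0_entries)
      done
    hence "det (I0 ** J - J ** I0) = 0"
      by (metis det_0 mat_0)
    thus False using d by simp
  qed
  have p1: "(c+dd)*(a-f) = 0" using eqs(9) eqs(6) by (simp add: algebra_simps)
  have p2: "(c+dd)*(b+e) = 0" using eqs(10) eqs(5) by (simp add: algebra_simps)
  have p3: "(c+dd)*(c-dd) = 0" using eqs(1-4) by (simp add: algebra_simps)
  have p4: "(b-e)*(a-f) = 0" using eqs(8) eqs(7) by (simp add: algebra_simps)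
  have p5: "(b-e)*(b+e) = 0" using eqs(1-4) by (simp add: algebra_simps)
  have p6: "(b-e)*(c-dd) = 0" using eqs(10) eqs(5) by (simp add: algebra_simps)
  have v: "a = f \<and> b = -e \<and> c = dd"
    using nz p1 p2 p3 p4 p5 p6 by auto
  show ?thesis
  proof
    show "J = Jn (J$1$2) (J$1$3) (J$1$4)"
      unfolding mat_eq4
    proof (intro allI)
      fix i j :: 4
      show "J$i$j = Jn (J$1$2) (J$1$3) (J$1$4) $i$j"
        using exhaust_4[of i] exhaust_4[of j] v
        by (elim disjE) (simp_all add: Jn_entries ent)
    qed
    show "(J$1$2)\<^sup>2 + (J$1$3)\<^sup>2 + (J$1$4)\<^sup>2 = 1"
      using eqs(1) by (simp add: ent power2_eq_square)
  qed
qed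



definition pb :: "real^4^4 \<Rightarrow> (4 \<Rightarrow> 4 \<Rightarrow> 4 \<Rightarrow> real) \<Rightarrow> 4 \<Rightarrow> 4 \<Rightarrow> 4 \<Rightarrow> real" where
  "pb P T i j k = (\<Sum>a\<in>UNIV. \<Sum>b\<in>UNIV. \<Sum>c\<in>UNIV. T a b c * P$a$i * P$b$j * P$c$k)"

definition s1 :: "real^4^4 \<Rightarrow> (4 \<Rightarrow> 4 \<Rightarrow> 4 \<Rightarrow> real) \<Rightarrow> 4 \<Rightarrow> 4 \<Rightarrow> 4 \<Rightarrow> real" where
  "s1 P T = (\<lambda>i b c. \<Sum>a\<in>UNIV. T a b c * P$a$i)"
definition s2 :: "real^4^4 \<Rightarrow> (4 \<Rightarrow> 4 \<Rightarrow> 4 \<Rightarrow> real) \<Rightarrow> 4 \<Rightarrow> 4 \<Rightarrow> 4 \<Rightarrow> real" where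
  "s2 P T = (\<lambda>a j c. \<Sum>b\<in>UNIV. T a b c * P$b$j)"
definition s3 :: "real^4^4 \<Rightarrow> (4 \<Rightarrow> 4 \<Rightarrow> 4 \<Rightarrow> real) \<Rightarrow> 4 \<Rightarrow> 4 \<Rightarrow> 4 \<Rightarrow> real" where
  "s3 P T = (\<lambda>a b k. \<Sum>c\<in>UNIV. T a b c * P$c$k)"

lemma pb_s: "pb P T = s1 P (s2 P (s3 P T))"
  by (simp add: fun_eq_iff pb_def s1_def s2_def s3_def sum_distrib_right sum_distrib_left mult_ac)

lemma s1_comp: "s1 B (s1 A T) = s1 (A ** B) T"
  by (simp add: fun_eq_iff s1_def matrix_matrix_mult_def sum_distrib_right sum_distrib_left mult.assoc)
     (subst sum.swap, simp)
lemma s2_comp: "s2 B (s2 A T) = s2 (A ** B) T"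
  by (simp add: fun_eq_iff s2_def matrix_matrix_mult_def sum_distrib_right sum_distrib_left mult.assoc)
     (subst sum.swap, simp)
lemma s3_comp: "s3 B (s3 A T) = s3 (A ** B) T"
  by (simp add: fun_eq_iff s3_def matrix_matrix_mult_def sum_distrib_right sum_distrib_left mult.assoc)
     (subst sum.swap, simp)
lemma s21: "s2 Q (s1 P T) = s1 P (s2 Q T)"
  by (simp add: fun_eq_iff s1_def s2_def sum_distrib_right) (subst sum.swap, simp add: mult_ac)
lemma s31: "s3 Q (s1 P T) = s1 P (s3 Q T)"
  by (simp add: fun_eq_iff s1_def s3_def sum_distrib_right) (subst sum.swap, simp add: mult_ac)
lemma s32: "s3 Q (s2 P T) = s2 P (s3 Q T)"
  by (simp add: fun_eq_iff s2_def s3_def sum_distrib_right) (subst sum.swap, simp add: mult_ac)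

lemma pb_comp: "pb B (pb A T) = pb (A ** B) T"
  by (simp only: pb_s s21 s31 s32 s1_comp s2_comp s3_comp)

lemma pb_id: "pb (mat 1) T = T"
  by (simp add: fun_eq_iff pb_def mat_def if_distrib[where f="\<lambda>x. _ * x"] cong: if_cong)



lemma sum3_rot: "(\<Sum>a\<in>(UNIV::'a::finite set). \<Sum>b\<in>(UNIV::'b::finite set). \<Sum>c\<in>(UNIV::'c::finite set). F a b c :: real)
   = (\<Sum>b\<in>UNIV. \<Sum>c\<in>UNIV. \<Sum>a\<in>UNIV. F a b c)"
proof -
  have "(\<Sum>a\<in>(UNIV::'a set). \<Sum>b\<in>(UNIV::'b set). \<Sum>c\<in>(UNIV::'c set). F a b c)
     = (\<Sum>b\<in>UNIV. \<Sum>a\<in>UNIV. \<Sum>c\<in>UNIV. F a b c)" by (rule sum.swap)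
  also have "\<dots> = (\<Sum>b\<in>UNIV. \<Sum>c\<in>UNIV. \<Sum>a\<in>UNIV. F a b c)"
    by (rule sum.cong[OF refl], rule sum.swap)
  finally show ?thesis .
qed

lemma pb_prod1: "pb P (\<lambda>a b c. f a * g b c) i j k = (\<Sum>a\<in>UNIV. f a * P$a$i) * (\<Sum>b\<in>UNIV. \<Sum>c\<in>UNIV. g b c * P$b$j * P$c$k)"
  apply (simp add: pb_def sum_distrib_left sum_distrib_right)
  apply (subst sum3_rot)
  apply (simp add: mult_ac)
  done

lemma pb_rot: "pb P (\<lambda>a b c. T b c a) i j k = pb P T j k i"
  unfolding pb_def
  apply (subst sum3_rot)
  apply (simp add: mult_ac)
  done

lemma pb_add: "pb P (\<lambda>a b c. T a b c + S a b c) i j k = pb P T i j k + pb P S i j k"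
  by (simp add: pb_def distrib_right sum.distrib)

lemma PtMP: "(transpose P ** M ** (P::real^4^4)) $ j $ k = (\<Sum>b\<in>UNIV. \<Sum>c\<in>UNIV. M$b$c * P$b$j * P$c$k)"
  apply (simp add: matrix_matrix_mult_def transpose_def sum_distrib_left sum_distrib_right mult_ac)
  apply (rule trans[OF sum.swap])
  apply (intro sum.cong refl)
  apply (simp add: algebra_simps)
  done

lemma thP: "(th v* (P::real^4^4)) $ i = (\<Sum>a\<in>UNIV. th$a * P$a$i)"
  by (simp add: vector_matrix_mult_def)

lemma pb_wedge: "pb P (wedge12 th om) i j k = wedge12 (th v* P) (transpose P ** om ** P) i j k"
proof -
  have "pb P (wedge12 th om) i j k = pb P (\<lambda>a b c. th$a * om$b$c) i j k
     + pb P (\<lambda>a b c. th$b * om$c$a) i j k + pb P (\<lambda>a b c. th$c * om$a$b) i j k"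
    unfolding wedge12_def by (simp add: pb_add[symmetric])
  also have "pb P (\<lambda>a b c. th$b * om$c$a) i j k = pb P (\<lambda>a b c. th$a * om$b$c) j k i"
    by (rule pb_rot)
  also have "pb P (\<lambda>a b c. th$c * om$a$b) i j k = pb P (\<lambda>a b c. th$b * om$c$a) j k i"
    by (rule pb_rot)
  also have "pb P (\<lambda>a b c. th$b * om$c$a) j k i = pb P (\<lambda>a b c. th$a * om$b$c) k i j"
    by (rule pb_rot)
  finally have X: "pb P (wedge12 th om) i j k = pb P (\<lambda>a b c. th $ a * om $ b $ c) i j k +
    pb P (\<lambda>a b c. th $ a * om $ b $ c) j k i + pb P (\<lambda>a b c. th $ a * om $ b $ c) k i j" .
  show ?thesis
    unfolding wedge12_def[of "th v* P"] X pb_prod1 PtMP thP by simp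
qed

lemma Q_entries: "(I0 ** Jn a b c) = (\<chi> i j. 
  if i=1 \<and> j=1 then a else if i=1 \<and> j=2 then 0 else if i=1 \<and> j=3 then -c else if i=1 \<and> j=4 then b
  else if i=2 \<and> j=1 then 0 else if i=2 \<and> j=2 then a else if i=2 \<and> j=3 then b else if i=2 \<and> j=4 then c
  else if i=3 \<and> j=1 then c else if i=3 \<and> j=2 then -b else if i=3 \<and> j=3 then a else if i=3 \<and> j=4 then 0
  else if i=4 \<and> j=1 then -b else if i=4 \<and> j=2 then -c else if i=4 \<and> j=3 then 0 else a)"
  unfolding mat_eq4
  apply (intro allI)
  subgoal for i j using exhaust_4[of i] exhaust_4[of j]
    by (elim disjE) (simp_all add: matrix_matrix_mult_def sum_4 I0_entries Jn_entries)
  done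

lemma F1n:
  assumes "a*a+b*b+c*c = 1"
  shows "\<forall>i j k. pb (I0 ** Jn a b c) (wedge12 th I0) i j k = wedge12 (-th) (Jn a b c) i j k"
  unfolding forall_4
  apply (simp add: pb_def Q_entries sum_4 wedge12_def I0_entries Jn_entries)
  apply (intro conjI)
  using assms by algebra+

lemma F2n: "I0 ** Jn a b c + Jn a b c ** I0 = (2*a) *\<^sub>R mat 1"
  unfolding mat_eq4
  apply (intro allI)
  subgoal for i j using exhaust_4[of i] exhaust_4[of j]
    by (elim disjE) (simp_all add: matrix_matrix_mult_def sum_4 I0_entries Jn_entries mat_def)
  done

lemma trn: "trace (I0 ** Jn a b c) = 4*a"
  by (simp add: trace_def sum_4 Q_entries)




definition gi :: "real^4^4 \<Rightarrow> real^4 \<Rightarrow> real^4 \<Rightarrow> real" where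
  "gi G x y = x \<bullet> (G *v y)"

lemma gi_add_l: "gi G (x + y) z = gi G x z + gi G y z" by (simp add: gi_def inner_add_left)
lemma gi_add_r: "gi G z (x + y) = gi G z x + gi G z y" by (simp add: gi_def inner_add_right matrix_vector_right_distrib)
lemma gi_diff_l: "gi G (x - y) z = gi G x z - gi G y z" by (simp add: gi_def inner_diff_left)
lemma gi_diff_r: "gi G z (x - y) = gi G z x - gi G z y" by (simp add: gi_def inner_diff_right matrix_vector_mult_diff_distrib)
lemma gi_scale_l: "gi G (c *\<^sub>R x) z = c * gi G x z" by (simp add: gi_def)
lemma gi_scale_r: "gi G z (c *\<^sub>R x) = c * gi G z x" by (simp add: gi_def matrix_vector_mult_scaleR)
lemmas gi_lin = gi_add_l gi_add_r gi_diff_l gi_diff_r gi_scale_l gi_scale_r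

lemma gi_sym: assumes "transpose G = G" shows "gi G x y = gi G y x"
proof -
  have "gi G x y = (x v* G) \<bullet> y" by (simp add: gi_def dot_lmul_matrix)
  also have "x v* G = G *v x" by (metis assms transpose_matrix_vector)
  finally show ?thesis by (simp add: gi_def inner_commute)
qed

lemma dot_Av: "(A *v x) \<bullet> z = x \<bullet> (transpose A *v (z::real^'n))"
  by (metis dot_lmul_matrix vector_transpose_matrix)

lemma mv_neg_l: "(- A) *v (x::real^'n) = - (A *v x)"
  by (simp add: vec_eq_iff matrix_vector_mult_def sum_negf)

lemma gi_A: assumes "transpose A ** G ** A = G" shows "gi G (A *v x) (A *v y) = gi G x y"
proof -
  have "gi G (A *v x) (A *v y) = x \<bullet> (transpose A *v (G *v (A *v y)))"
    unfolding gi_def by (rule dot_Av)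
  also have "transpose A *v (G *v (A *v y)) = (transpose A ** G ** A) *v y"
    by (simp only: matrix_vector_mul_assoc matrix_mul_assoc)
  finally show ?thesis using assms by (simp add: gi_def)
qed

lemma gi_A_swap: assumes "transpose A ** G ** A = G" "A ** A = - mat 1"
  shows "gi G (A *v x) y = - gi G x (A *v y)"
proof -
  have "gi G (A *v x) y = gi G (A *v (A *v x)) (A *v y)" using gi_A[OF assms(1)] by simp
  also have "A *v (A *v x) = - x" using assms(2) by (simp add: matrix_vector_mul_assoc mv_neg_l)
  finally show ?thesis by (simp add: gi_def)
qed

lemma gi_Ax_x: assumes "transpose G = G" "transpose A ** G ** A = G" "A ** A = - mat 1"
  shows "gi G x (A *v x) = 0"
  using gi_A_swap[OF assms(2,3), of x x] gi_sym[OF assms(1), of x "A *v x"] by simp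

lemma PtGP:
  fixes e :: "4 \<Rightarrow> real^4"
  shows "(transpose (\<chi> i j. e j $ i) ** G ** (\<chi> i j. e j $ i)) $ i $ j = gi G (e i) (e j)"
  by (simp add: gi_def matrix_matrix_mult_def transpose_def inner_vec_def matrix_vector_mult_def
      sum_4 algebra_simps)

lemma normalize:
  fixes G A :: "real^4^4"
  assumes gs: "transpose G = G" and gp: "\<forall>v. v \<noteq> 0 \<longrightarrow> v \<bullet> (G *v v) > 0"
    and aa: "A ** A = - mat 1" and ag: "transpose A ** G ** A = G"
  shows "\<exists>P. transpose P ** G ** P = mat 1 \<and> A ** P = P ** I0"
proof -
  have pos: "v \<noteq> 0 \<Longrightarrow> gi G v v > 0" for v using gp by (simp add: gi_def)
  have sym: "gi G x y = gi G y x" for x y using gi_sym[OF gs] .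
  have swap: "gi G (A *v x) y = - gi G x (A *v y)" for x y using gi_A_swap[OF ag aa] .
  have aA: "gi G (A *v x) (A *v y) = gi G x y" for x y using gi_A[OF ag] .
  have xax: "gi G x (A *v x) = 0" for x using gi_Ax_x[OF gs ag aa] .
  have AA: "A *v (A *v x) = - x" for x using aa by (simp add: matrix_vector_mul_assoc mv_neg_l)
  define x1 :: "real^4" where "x1 = axis 1 1"
  have "x1 \<noteq> 0" by (simp add: x1_def)
  hence n1: "gi G x1 x1 > 0" using pos by auto
  define e1 where "e1 = (1 / sqrt (gi G x1 x1)) *\<^sub>R x1"
  have g11: "gi G e1 e1 = 1" using n1 by (simp add: e1_def gi_lin real_sqrt_mult[symmetric])
  define e2 where "e2 = A *v e1"
  have g22: "gi G e2 e2 = 1" using g11 aA by (simp add: e2_def)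
  have g12: "gi G e1 e2 = 0" using xax by (simp add: e2_def)
  obtain w where w: "w \<notin> span {e1, e2}"
  proof -
    have "\<not> (UNIV \<subseteq> span {e1, e2})"
    proof
      assume "UNIV \<subseteq> span {e1, e2}"
      hence "dim (UNIV :: (real^4) set) \<le> card {e1, e2}" by (intro dim_le_card) auto
      also have "\<dots> \<le> 2" by (simp add: card_insert_le_m1)
      finally show False by simp
    qed
    thus ?thesis using that by auto
  qed
  define f where "f = w - gi G e1 w *\<^sub>R e1 - gi G e2 w *\<^sub>R e2"
  have "f \<noteq> 0"
  proof
    assume "f = 0"
    hence "w = gi G e1 w *\<^sub>R e1 + gi G e2 w *\<^sub>R e2" by (simp add: f_def algebra_simps)
    hence "w \<in> span {e1, e2}" by (metis span_add span_base span_scale insertI1 insertI2 singletonI)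
    thus False using w by simp
  qed
  hence nf: "gi G f f > 0" using pos by auto
  have f1: "gi G e1 f = 0" using g11 g12 by (simp add: f_def gi_lin sym[of e2 e1])
  have f2: "gi G e2 f = 0" using g22 g12 by (simp add: f_def gi_lin sym[of e2 e1])
  define e3 where "e3 = (1 / sqrt (gi G f f)) *\<^sub>R f"
  have g33: "gi G e3 e3 = 1" using nf by (simp add: e3_def gi_lin real_sqrt_mult[symmetric])
  have g13: "gi G e1 e3 = 0" using f1 by (simp add: e3_def gi_lin)
  have g23: "gi G e2 e3 = 0" using f2 by (simp add: e3_def gi_lin)
  define e4 where "e4 = A *v e3"
  have g44: "gi G e4 e4 = 1" using g33 aA by (simp add: e4_def)
  have g34: "gi G e3 e4 = 0" using xax by (simp add: e4_def)
  have g14: "gi G e1 e4 = 0" using g23 swap[of e1 e3] sym[of e1] by (simp add: e4_def e2_def)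
  have g24: "gi G e2 e4 = 0" using g13 aA by (simp add: e4_def e2_def)
  define e :: "4 \<Rightarrow> real^4" where "e = (\<lambda>i. if i = 1 then e1 else if i = 2 then e2 else if i = 3 then e3 else e4)"
  have e_simps: "e 1 = e1" "e 2 = e2" "e 3 = e3" "e 4 = e4" by (simp_all add: e_def)
  define P where "P = (\<chi> i j. e j $ i)"
  have "transpose P ** G ** P = mat 1"
    unfolding mat_eq4 P_def PtGP
  proof (intro allI)
    fix i j :: 4
    show "gi G (e i) (e j) = mat 1 $ i $ j"
      using exhaust_4[of i] exhaust_4[of j] g11 g22 g33 g44 g12 g13 g14 g23 g24 g34
        sym[of e2 e1] sym[of e3 e1] sym[of e4 e1] sym[of e3 e2] sym[of e4 e2] sym[of e4 e3]
      by (elim disjE) (simp_all add: e_simps mat_def)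
  qed
  moreover have "A ** P = P ** I0"
    unfolding mat_eq4 P_def
  proof (intro allI)
    fix i j :: 4
    have Ae: "A *v e1 = e2" "A *v e2 = - e1" "A *v e3 = e4" "A *v e4 = - e3"
      by (simp_all add: e2_def e4_def AA)
    have "(A ** (\<chi> i j. e j $ i)) $ i $ j = (A *v e j) $ i"
      by (simp add: matrix_matrix_mult_def matrix_vector_mult_def)
    moreover have "((\<chi> i j. e j $ i) ** I0) $ i $ j = (\<Sum>k\<in>UNIV. e k $ i * I0 $ k $ j)"
      by (simp add: matrix_matrix_mult_def)
    ultimately show "(A ** (\<chi> i j. e j $ i)) $ i $ j = ((\<chi> i j. e j $ i) ** I0) $ i $ j"
      using exhaust_4[of j] Ae
      by (elim disjE) (simp_all add: sum_4 e_simps I0_entries)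
  qed
  ultimately show ?thesis by (intro exI[of _ P] conjI)
qed


definition TT :: "(4 \<Rightarrow> real^4^4) \<Rightarrow> real^4 \<Rightarrow> real^4^4" where
  "TT T X = (\<Sum>l\<in>UNIV. X$l *\<^sub>R T l)"
definition tt :: "(4 \<Rightarrow> real^4^4) \<Rightarrow> real^4 \<Rightarrow> real^4 \<Rightarrow> real^4 \<Rightarrow> real" where
  "tt T X Y Z = Y \<bullet> (TT T X *v Z)"
definition Dv :: "(4 \<Rightarrow> 4 \<Rightarrow> 4 \<Rightarrow> real) \<Rightarrow> real^4 \<Rightarrow> real^4 \<Rightarrow> real^4 \<Rightarrow> real" where
  "Dv D X Y Z = (\<Sum>a\<in>UNIV. \<Sum>b\<in>UNIV. \<Sum>c\<in>UNIV. D a b c * X$a * Y$b * Z$c)"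

lemma TT_add: "TT T (X + X') = TT T X + TT T X'"
  by (simp add: TT_def scaleR_add_left sum.distrib)
lemma TT_scale: "TT T (c *\<^sub>R X) = c *\<^sub>R TT T X"
  by (simp add: TT_def scaleR_sum_right)
lemma TT_neg: "TT T (- X) = - TT T X"
  by (simp add: TT_def sum_negf)
lemma TT_axis: "TT T (axis l 1) = T l"
proof -
  have "TT T (axis l 1) = (\<Sum>m\<in>UNIV. (if m = l then T l else 0))"
    unfolding TT_def by (intro sum.cong) (auto simp: axis_def)
  thus ?thesis by simp
qed

lemma mv_add_l: "((A::real^4^4) + B) *v x = A *v x + B *v x"
  by (simp add: vec_eq_iff matrix_vector_mult_def sum.distrib distrib_right)
lemma mv_scale_l: "((c::real) *\<^sub>R (A::real^4^4)) *v x = c *\<^sub>R (A *v x)"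
  by (simp add: vec_eq_iff matrix_vector_mult_def sum_distrib_left mult.assoc)

lemma mv_neg_r: "(A::real^4^4) *v (- x) = - (A *v x)"
  by (simp add: vec_eq_iff matrix_vector_mult_def sum_negf)
lemma mv_axis: "((M::real^4^4) *v axis k 1) $ j = M $ j $ k"
  by (simp add: matrix_vector_mult_def axis_def if_distrib[where f="\<lambda>x. _ * x"] cong: if_cong)
lemma inner_axis_l: "axis j 1 \<bullet> (v::real^4) = v $ j"
  by (simp add: inner_vec_def axis_def if_distrib[where f="\<lambda>x. x * _"] cong: if_cong)

lemma tt_add1: "tt T (X + X') Y Z = tt T X Y Z + tt T X' Y Z"
  by (simp add: tt_def TT_add mv_add_l inner_add_right)
lemma tt_scale1: "tt T (c *\<^sub>R X) Y Z = c * tt T X Y Z"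
  by (simp add: tt_def TT_scale mv_scale_l)
lemma tt_neg1: "tt T (- X) Y Z = - tt T X Y Z"
  by (simp add: tt_def TT_neg mv_neg_l)
lemma tt_neg2: "tt T X (- Y) Z = - tt T X Y Z"
  by (simp add: tt_def)
lemma tt_neg3: "tt T X Y (- Z) = - tt T X Y Z"
  by (simp add: tt_def mv_neg_r)

lemma tt_e: "tt T (axis l 1) (axis j 1) (axis k 1) = T l $ j $ k"
  by (simp add: tt_def TT_axis inner_axis_l mv_axis)

lemma tt_sum: "tt T X Y Z = (\<Sum>a\<in>UNIV. \<Sum>b\<in>UNIV. \<Sum>c\<in>UNIV. T a $ b $ c * X$a * Y$b * Z$c)"
proof -
  have "tt T X Y Z = (\<Sum>b\<in>UNIV. \<Sum>c\<in>UNIV. \<Sum>a\<in>UNIV. T a $ b $ c * X$a * Y$b * Z$c)"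
    by (simp add: tt_def TT_def inner_vec_def matrix_vector_mult_def sum_distrib_left
        sum_distrib_right mult_ac)
  also have "\<dots> = (\<Sum>a\<in>UNIV. \<Sum>b\<in>UNIV. \<Sum>c\<in>UNIV. T a $ b $ c * X$a * Y$b * Z$c)"
    by (rule sum3_rot[symmetric])
  finally show ?thesis .
qed

lemma P3v:
  assumes "\<forall>l j k. D l j k = T l $ j $ k + T j $ k $ l + T k $ l $ j"
  shows "Dv D X Y Z = tt T X Y Z + tt T Y Z X + tt T Z X Y"
proof -
  have "Dv D X Y Z = (\<Sum>a\<in>UNIV. \<Sum>b\<in>UNIV. \<Sum>c\<in>UNIV. T a $ b $ c * X$a * Y$b * Z$c)
      + (\<Sum>a\<in>UNIV. \<Sum>b\<in>UNIV. \<Sum>c\<in>UNIV. T b $ c $ a * X$a * Y$b * Z$c)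
      + (\<Sum>a\<in>UNIV. \<Sum>b\<in>UNIV. \<Sum>c\<in>UNIV. T c $ a $ b * X$a * Y$b * Z$c)"
    unfolding Dv_def by (simp add: assms[rule_format] sum.distrib distrib_right)
  also have "(\<Sum>a\<in>UNIV. \<Sum>b\<in>UNIV. \<Sum>c\<in>UNIV. T b $ c $ a * X$a * Y$b * Z$c) = tt T Y Z X"
    unfolding tt_sum by (subst sum3_rot) (simp add: mult_ac)
  also have "(\<Sum>a\<in>UNIV. \<Sum>b\<in>UNIV. \<Sum>c\<in>UNIV. T c $ a $ b * X$a * Y$b * Z$c) = tt T Z X Y"
    unfolding tt_sum by (subst (2) sum3_rot) (simp add: mult_ac)
  finally show ?thesis by (simp add: tt_sum)
qed

lemma TT_skew:
  assumes "\<forall>l. transpose (T l) = - T l"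
  shows "transpose (TT T X) = - TT T X"
proof -
  have tr_sum: "finite S \<Longrightarrow> transpose (sum f S) = sum (\<lambda>l. transpose (f l)) S" for f :: "4 \<Rightarrow> real^4^4" and S :: "4 set"
    by (induction S rule: finite_induct) (simp_all add: tr_add tr_zero)
  show ?thesis
    unfolding TT_def by (simp add: tr_sum tr_scale assms sum_negf)
qed

lemma tt_skew:
  assumes "\<forall>l. transpose (T l) = - T l"
  shows "tt T X Y Z = - tt T X Z Y"
proof -
  have "tt T X Y Z = Z \<bullet> (transpose (TT T X) *v Y)"
    by (simp add: tt_def dot_lmul_matrix[symmetric] inner_commute)
  thus ?thesis using TT_skew[OF assms] by (simp add: tt_def mv_neg_l)
qed

lemma mm_sum_r: "finite S \<Longrightarrow> (A::real^4^4) ** sum f S = sum (\<lambda>l. A ** f l) S"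
  by (induction S rule: finite_induct) (simp_all add: mm_add_r mm_zero_r)
lemma mm_sum_l: "finite S \<Longrightarrow> sum f S ** (A::real^4^4) = sum (\<lambda>l. f l ** A) S"
  by (induction S rule: finite_induct) (simp_all add: mm_add_l mm_zero_l)

lemma TT_A:
  assumes "\<forall>l. transpose A ** T l ** A = - T l"
  shows "transpose A ** TT T X ** A = - TT T X"
proof -
  have "transpose A ** TT T X ** A = (\<Sum>l\<in>UNIV. X$l *\<^sub>R (transpose A ** T l ** A))"
    unfolding TT_def by (simp add: mm_sum_r mm_sum_l mm_scale_r mm_scale_l)
  also have "\<dots> = - TT T X" using assms by (simp add: TT_def sum_negf)
  finally show ?thesis .
qed


lemma tt_A:
  assumes "\<forall>l. transpose A ** T l ** A = - T l"
  shows "tt T X (A *v Y) (A *v Z) = - tt T X Y Z"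
proof -
  have "tt T X (A *v Y) (A *v Z) = Y \<bullet> ((transpose A ** TT T X ** A) *v Z)"
    unfolding tt_def by (simp add: dot_Av matrix_vector_mul_assoc matrix_mul_assoc)
  thus ?thesis using TT_A[OF assms] by (simp add: tt_def mv_neg_l matrix_mul_assoc)
qed

definition Nv :: "(4 \<Rightarrow> real^4^4) \<Rightarrow> real^4^4 \<Rightarrow> real^4 \<Rightarrow> real^4 \<Rightarrow> real^4 \<Rightarrow> real" where
  "Nv T A W Y Z = tt T (A *v Y) W Z - tt T (A *v Z) W Y + tt T Y (A *v W) Z - tt T Z (A *v W) Y"

definition Nidx :: "(4 \<Rightarrow> real^4^4) \<Rightarrow> real^4^4 \<Rightarrow> 4 \<Rightarrow> 4 \<Rightarrow> 4 \<Rightarrow> real" where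
  "Nidx T A s i j = (\<Sum>m\<in>UNIV. A$m$i * T m $ s $ j) - (\<Sum>m\<in>UNIV. A$m$j * T m $ s $ i)
     + (transpose A ** T i) $ s $ j - (transpose A ** T j) $ s $ i"

lemma TT_entry: "TT T X $ s $ j = (\<Sum>m\<in>UNIV. X$m * T m $ s $ j)"
  by (simp add: TT_def)

lemma tt_axis23: "tt T X (axis s 1) (axis j 1) = (\<Sum>m\<in>UNIV. X$m * T m $ s $ j)"
  by (simp add: tt_def inner_axis_l mv_axis TT_entry)

lemma tt_A2: "tt T X ((A::real^4^4) *v axis s 1) (axis j 1) = (transpose A ** TT T X) $ s $ j"
proof -
  have "tt T X (A *v axis s 1) (axis j 1) = axis s 1 \<bullet> (transpose A *v (TT T X *v axis j 1))"
    unfolding tt_def by (rule dot_Av)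
  also have "\<dots> = (transpose A ** TT T X) $ s $ j"
    by (simp add: inner_axis_l mv_axis matrix_vector_mul_assoc)
  finally show ?thesis .
qed

lemma Nv_axis: "Nv T A (axis s 1) (axis i 1) (axis j 1) = Nidx T A s i j"
  unfolding Nv_def Nidx_def tt_axis23 tt_A2 TT_axis by (simp add: mv_axis)

lemma tt_lin2: "tt T X W Z = (\<Sum>s\<in>UNIV. W$s * tt T X (axis s 1) Z)"
  by (simp add: tt_def inner_axis_l) (simp add: inner_vec_def)

lemma tt_lin2A: "tt T X ((A::real^4^4) *v W) Z = (\<Sum>s\<in>UNIV. W$s * tt T X (A *v axis s 1) Z)"
  by (simp add: tt_def dot_Av inner_axis_l) (simp add: inner_vec_def)

lemma Nv_lin: "Nv T A W Y Z = (\<Sum>s\<in>UNIV. W$s * Nv T A (axis s 1) Y Z)"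
  unfolding Nv_def
  by (subst (1 2) tt_lin2, subst (1 2) tt_lin2A)
     (simp add: sum_subtractf[symmetric] sum.distrib[symmetric] algebra_simps)

lemma Nv_zero:
  assumes "\<forall>s i j. Nidx T A s i j = 0"
  shows "Nv T A W (axis i 1) (axis j 1) = 0"
  using assms by (subst Nv_lin) (simp add: Nv_axis)

lemma sum_axis: "(\<Sum>a\<in>UNIV. (axis l (1::real))$a * f a) = f (l::4)"
proof -
  have "(\<Sum>a\<in>UNIV. (axis l (1::real))$a * f a) = (\<Sum>a\<in>UNIV. if a = l then f a else 0)"
    by (intro sum.cong) (auto simp: axis_def)
  thus ?thesis by simp
qed

lemma sum_axis_r: "(\<Sum>a\<in>UNIV. f a * (axis l (1::real))$a) = f (l::4)"
  using sum_axis[of l f] by (simp add: mult.commute)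

lemma Dv_axis: "Dv D (axis l 1) Y Z = (\<Sum>b\<in>UNIV. \<Sum>c\<in>UNIV. D l b c * Y$b * Z$c)"
proof -
  have "Dv D (axis l 1) Y Z = (\<Sum>a\<in>UNIV. (axis l 1)$a * (\<Sum>b\<in>UNIV. \<Sum>c\<in>UNIV. D a b c * Y$b * Z$c))"
    by (simp add: Dv_def sum_distrib_left mult_ac)
  thus ?thesis by (simp only: sum_axis)
qed

lemma KN:
  assumes sk: "\<forall>l. transpose (T l) = - T l"
    and ai: "\<forall>l. transpose A ** T l ** A = - T l"
    and aa: "A ** A = - mat 1"
    and p3: "\<forall>l j k. D l j k = T l $ j $ k + T j $ k $ l + T k $ l $ j"
    and nz: "\<forall>s i j. Nidx T A s i j = 0"
  shows "2 * T l $ j $ k = D l j k - (\<Sum>b\<in>UNIV. \<Sum>c\<in>UNIV. D l b c * A$b$j * A$c$k)"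
proof -
  define X :: "real^4" where "X = axis l 1"
  define Y :: "real^4" where "Y = axis j 1"
  define Z :: "real^4" where "Z = axis k 1"
  have AAv: "A *v (A *v v) = - v" for v using aa by (simp add: matrix_vector_mul_assoc mv_neg_l)
  have skv: "tt T U V W = - tt T U W V" for U V W using tt_skew[OF sk] .
  have av: "tt T U (A *v V) (A *v W) = - tt T U V W" for U V W using tt_A[OF ai] .
  have swapA: "tt T U (A *v V) W = tt T U V (A *v W)" for U V W
  proof -
    have "tt T U (A *v V) W = tt T U (A *v V) (A *v (A *v (- W)))" by (simp add: AAv)
    also have "\<dots> = - tt T U V (A *v (- W))" by (rule av)
    also have "\<dots> = tt T U V (A *v W)" by (simp add: mv_neg_r tt_neg3)
    finally show ?thesis .
  qed
  have d1: "Dv D X Y Z = D l j k"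
    unfolding X_def Y_def Z_def by (simp only: Dv_axis sum_axis_r)
  have d2: "Dv D X (A *v Y) (A *v Z) = (\<Sum>b\<in>UNIV. \<Sum>c\<in>UNIV. D l b c * A$b$j * A$c$k)"
    by (simp add: X_def Y_def Z_def Dv_axis mv_axis)
  have e1: "Dv D X Y Z = tt T X Y Z + tt T Y Z X + tt T Z X Y" by (rule P3v[OF p3])
  have e2: "Dv D X (A *v Y) (A *v Z) = tt T X (A *v Y) (A *v Z) + tt T (A *v Y) (A *v Z) X
      + tt T (A *v Z) X (A *v Y)" by (rule P3v[OF p3])
  have n0: "Nv T A (A *v X) Y Z = 0" unfolding Y_def Z_def by (rule Nv_zero[OF nz])
  have n1: "Nv T A (A *v X) Y Z = - tt T (A *v Y) (A *v Z) X - tt T (A *v Z) X (A *v Y)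
      + tt T Y Z X + tt T Z X Y"
  proof -
    have a: "tt T (A *v Y) (A *v X) Z = - tt T (A *v Y) (A *v Z) X"
      using swapA[of "A *v Y" X Z] skv[of "A *v Y" X "A *v Z"] by simp
    have b: "tt T (A *v Z) (A *v X) Y = tt T (A *v Z) X (A *v Y)"
      using swapA[of "A *v Z" X Y] by simp
    have c: "tt T Y (A *v (A *v X)) Z = tt T Y Z X"
      using skv[of Y X Z] by (simp add: AAv tt_neg2)
    have d: "tt T Z (A *v (A *v X)) Y = - tt T Z X Y"
      by (simp add: AAv tt_neg2)
    show ?thesis unfolding Nv_def a b c d by simp
  qed
  have "tt T X Y Z = T l $ j $ k" by (simp add: X_def Y_def Z_def tt_e)
  thus ?thesis using d1 d2 e1 e2 n0 n1 av[of X Y Z] by linarith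
qed


definition Lc :: "(4 \<Rightarrow> real^4^4) \<Rightarrow> 4 \<Rightarrow> real^4^4" where
  "Lc Gd l = (\<chi> k j. (Gd l $ j $ k + Gd j $ l $ k - Gd k $ l $ j) / 2)"

definition Tm :: "real^4^4 \<Rightarrow> (4 \<Rightarrow> real^4^4) \<Rightarrow> real^4^4 \<Rightarrow> (4 \<Rightarrow> real^4^4) \<Rightarrow> 4 \<Rightarrow> real^4^4" where
  "Tm G Gd A Ad l = G ** Ad l + Lc Gd l ** A + transpose A ** Lc Gd l"

lemma Lc_sym:
  assumes "\<forall>l i j. Gd l $ i $ j = Gd l $ j $ i"
  shows "Lc Gd l + transpose (Lc Gd l) = Gd l"
  using assms by (simp add: Lc_def vec_eq_iff transpose_def field_simps)

lemma Lc_swap: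
  assumes "\<forall>l i j. Gd l $ i $ j = Gd l $ j $ i"
  shows "Lc Gd l $ k $ j = Lc Gd j $ k $ l"
  using assms by (simp add: Lc_def)

lemma Tm_skew:
  assumes gs: "transpose G = G" and gds: "\<forall>l i j. Gd l $ i $ j = Gd l $ j $ i"
    and om: "Gd l ** A + G ** Ad l + transpose A ** Gd l + transpose (Ad l) ** G = 0"
  shows "transpose (Tm G Gd A Ad l) = - Tm G Gd A Ad l"
proof -
  let ?L = "Lc Gd l"
  have "Tm G Gd A Ad l + transpose (Tm G Gd A Ad l)
      = G ** Ad l + transpose (Ad l) ** G + (?L + transpose ?L) ** A + transpose A ** (?L + transpose ?L)"
    by (simp add: Tm_def mm_simps gs algebra_simps)
  also have "\<dots> = 0" using om Lc_sym[OF gds, of l] by (simp add: algebra_simps)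
  finally show ?thesis by (simp add: eq_neg_iff_add_eq_0 add.commute)
qed

lemma Tm_A:
  assumes aa: "A ** A = - mat 1" and ag: "transpose A ** G ** A = G"
    and ad: "Ad l ** A + A ** Ad l = 0"
  shows "transpose A ** Tm G Gd A Ad l ** A = - Tm G Gd A Ad l"
proof -
  let ?L = "Lc Gd l"
  have at: "transpose A ** transpose A = - mat 1"
    using aa by (metis matrix_transpose_mul tr_neg transpose_mat)
  have adA: "Ad l ** A = - (A ** Ad l)" using ad by (simp add: eq_neg_iff_add_eq_0)
  have "transpose A ** G ** Ad l ** A = - (transpose A ** G ** A ** Ad l)"
    by (metis adA matrix_mul_assoc mm_neg_r)
  hence 1: "transpose A ** G ** Ad l ** A = - (G ** Ad l)" using ag by simp
  have 2: "transpose A ** ?L ** A ** A = - (transpose A ** ?L)"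
    by (metis aa matrix_mul_assoc matrix_mul_rid mm_neg_r)
  have 3: "transpose A ** (transpose A ** ?L) ** A = - (?L ** A)"
    by (metis at matrix_mul_assoc matrix_mul_lid mm_neg_l)
  show ?thesis
    unfolding Tm_def mm_add_r mm_add_l
    using 1 2 3 by (simp add: matrix_mul_assoc)
qed


lemma P3_cyc:
  assumes gds: "\<forall>l i j. Gd l $ i $ j = Gd l $ j $ i"
  shows "(Lc Gd l ** A + transpose A ** Lc Gd l - Gd l ** A) $ j $ k
       + (Lc Gd j ** A + transpose A ** Lc Gd j - Gd j ** A) $ k $ l
       + (Lc Gd k ** A + transpose A ** Lc Gd k - Gd k ** A) $ l $ j = 0"
proof -
  have s: "Gd a $ b $ c = Gd a $ c $ b" for a b c using gds by blast
  show ?thesis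
    by (simp add: Lc_def matrix_matrix_mult_def transpose_def sum_4 s field_simps)
qed

lemma P3:
  assumes gds: "\<forall>l i j. Gd l $ i $ j = Gd l $ j $ i"
    and dd: "\<forall>l j k. D l j k = (Gd l ** A + G ** Ad l) $ j $ k + (Gd j ** A + G ** Ad j) $ k $ l
                             + (Gd k ** A + G ** Ad k) $ l $ j"
  shows "D l j k = Tm G Gd A Ad l $ j $ k + Tm G Gd A Ad j $ k $ l + Tm G Gd A Ad k $ l $ j"
  using P3_cyc[OF gds, of l A j k] dd
  by (simp add: Tm_def algebra_simps)


definition nij :: "real^4^4 \<Rightarrow> (4 \<Rightarrow> real^4^4) \<Rightarrow> 4 \<Rightarrow> 4 \<Rightarrow> 4 \<Rightarrow> real" where
  "nij A Ad i j k = (\<Sum>l\<in>UNIV. A $ l $ i * Ad l $ k $ j - A $ l $ j * Ad l $ k $ i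
              - A $ k $ l * (Ad i $ l $ j - Ad j $ l $ i))"

lemma Gpart:
  "(\<Sum>m\<in>UNIV. A$m$i * (G ** Ad m)$s$j) - (\<Sum>m\<in>UNIV. A$m$j * (G ** Ad m)$s$i)
    - (G ** A ** Ad i)$s$j + (G ** A ** Ad j)$s$i = (\<Sum>k\<in>UNIV. G$s$k * nij A Ad i j k)"
  by (simp add: nij_def matrix_matrix_mult_def sum_4 algebra_simps)

lemma Lpart:
  assumes sw: "\<forall>l k j. (L l :: real^4^4) $ k $ j = L j $ k $ l"
  shows "(\<Sum>m\<in>UNIV. A$m$i * ((L m ** A)$s$j + (transpose A ** L m)$s$j))
     - (\<Sum>m\<in>UNIV. A$m$j * ((L m ** A)$s$i + (transpose A ** L m)$s$i))
     + (transpose A ** L i ** A)$s$j - L i $s$j - (transpose A ** L j ** A)$s$i + L j $s$i = 0"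
proof -
  have s: "L l $ k $ j = L j $ k $ l" for l k j using sw by blast
  show ?thesis
    by (simp add: matrix_matrix_mult_def transpose_def sum_4 algebra_simps s)
qed


lemma AtG: fixes A G :: "real^4^4" assumes aa: "A ** A = - mat 1" and ag: "transpose A ** G ** A = G"
  shows "transpose A ** G = - (G ** A)"
proof -
  have 1: "transpose A ** G ** (A ** A) = G ** A" using ag by (simp add: matrix_mul_assoc)
  have 2: "transpose A ** G ** (A ** A) = - (transpose A ** G)" unfolding aa by (simp add: mm_neg_r)
  from 1 2 show ?thesis by (metis minus_minus)
qed

lemma P4:
  assumes aa: "A ** A = - mat 1" and ag: "transpose A ** G ** A = G"
    and gds: "\<forall>l i j. Gd l $ i $ j = Gd l $ j $ i"
    and nz: "\<forall>i j k. nij A Ad i j k = 0"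
  shows "Nidx (Tm G Gd A Ad) A s i j = 0"
proof -
  let ?L = "Lc Gd"
  have at: "transpose A ** transpose A = - mat 1"
    using aa by (metis matrix_transpose_mul tr_neg transpose_mat)
  have atg: "transpose A ** G = - (G ** A)" by (rule AtG[OF aa ag])
  have AtT: "transpose A ** Tm G Gd A Ad m = - (G ** A ** Ad m) + transpose A ** ?L m ** A - ?L m" for m
  proof -
    have "transpose A ** Tm G Gd A Ad m = transpose A ** G ** Ad m + transpose A ** ?L m ** A
        + transpose A ** transpose A ** ?L m"
      by (simp add: Tm_def mm_add_r matrix_mul_assoc)
    thus ?thesis using at atg by (simp add: mm_neg_l)
  qed
  have sw: "\<forall>l k j. ?L l $ k $ j = ?L j $ k $ l" using Lc_swap[OF gds] by blast
  have "Nidx (Tm G Gd A Ad) A s i j =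
     ((\<Sum>m\<in>UNIV. A$m$i * (G ** Ad m)$s$j) - (\<Sum>m\<in>UNIV. A$m$j * (G ** Ad m)$s$i)
    - (G ** A ** Ad i)$s$j + (G ** A ** Ad j)$s$i)
    + ((\<Sum>m\<in>UNIV. A$m$i * ((?L m ** A)$s$j + (transpose A ** ?L m)$s$j))
     - (\<Sum>m\<in>UNIV. A$m$j * ((?L m ** A)$s$i + (transpose A ** ?L m)$s$i))
     + (transpose A ** ?L i ** A)$s$j - ?L i $s$j - (transpose A ** ?L j ** A)$s$i + ?L j $s$i)"
    unfolding Nidx_def AtT
    by (simp add: Tm_def algebra_simps sum.distrib)
  also have "\<dots> = 0"
    unfolding Gpart Lpart[OF sw] using nz by simp
  finally show ?thesis .
qed


lemma trace_wedge:
  fixes X om M :: "real^4^4"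
  shows "trace (X ** (\<chi> j k. wedge12 th om l j k) ** M) = th$l * trace (X ** om ** M)
     + ((transpose om ** M ** X) *v th)$l + ((om ** transpose X ** transpose M) *v th)$l"
  by (simp add: trace_def matrix_matrix_mult_def matrix_vector_mult_def transpose_def wedge12_def
      sum_4 algebra_simps)


lemma mat_ids:
  fixes G Ginv A B :: "real^4^4"
  assumes gs: "transpose G = G" and gl: "Ginv ** G = mat 1" and gr: "G ** Ginv = mat 1"
    and gis: "transpose Ginv = Ginv"
    and aa: "A ** A = - mat 1" and ag: "transpose A ** G ** A = G"
    and bb: "B ** B = - mat 1" and bg: "transpose B ** G ** B = G"
  shows "transpose (G ** A) ** (B + A ** B ** A) ** Ginv = transpose (A ** B - B ** A)"
    and "G ** A ** transpose Ginv ** transpose (B + A ** B ** A) = transpose (A ** B - B ** A)"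
    and "trace (Ginv ** (G ** A) ** (B + A ** B ** A)) = 0"
    and "Ginv ** transpose A = - (A ** Ginv)"
proof -
  have atg: "transpose A ** G = - (G ** A)" by (rule AtG[OF aa ag])
  have btg: "transpose B ** G = - (G ** B)" by (rule AtG[OF bb bg])
  have r1: "X ** Ginv ** G = X" for X :: "real^4^4" by (metis gl matrix_mul_assoc matrix_mul_rid)
  have r2: "X ** G ** Ginv = X" for X :: "real^4^4" by (metis gr matrix_mul_assoc matrix_mul_rid)
  have r3: "X ** A ** A = - X" for X :: "real^4^4" by (metis aa matrix_mul_assoc matrix_mul_rid mm_neg_r)
  have at: "transpose A ** transpose A = - mat 1"
    using aa by (metis matrix_transpose_mul tr_neg transpose_mat)
  have r4: "X ** transpose A ** transpose A = - X" for X :: "real^4^4"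
    by (metis at matrix_mul_assoc matrix_mul_rid mm_neg_r)
  have gag: "G ** A ** Ginv = - transpose A"
  proof -
    have "transpose A ** G ** Ginv = - (G ** A) ** Ginv" using atg by simp
    thus ?thesis by (simp add: r2 mm_neg_l)
  qed
  have gbg: "G ** B ** Ginv = - transpose B"
  proof -
    have "transpose B ** G ** Ginv = - (G ** B) ** Ginv" using btg by simp
    thus ?thesis by (simp add: r2 mm_neg_l)
  qed
  have gag': "X ** G ** A ** Ginv = - (X ** transpose A)" for X :: "real^4^4"
    by (metis gag matrix_mul_assoc mm_neg_r)
  have gbg': "X ** G ** B ** Ginv = - (X ** transpose B)" for X :: "real^4^4"
    by (metis gbg matrix_mul_assoc mm_neg_r)
  have ginvat: "Ginv ** transpose A = - (A ** Ginv)"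
  proof -
    have "Ginv ** (G ** A ** Ginv) = A ** Ginv" by (metis gl matrix_mul_assoc matrix_mul_lid)
    hence "- (Ginv ** transpose A) = A ** Ginv" by (simp add: gag mm_neg_r)
    thus ?thesis by (metis minus_minus)
  qed
  show "Ginv ** transpose A = - (A ** Ginv)" by (rule ginvat)
  have tGA: "transpose (G ** A) = - (G ** A)" using atg gs by (simp add: matrix_transpose_mul)
  have e1: "G ** A ** B ** Ginv = transpose A ** transpose B"
  proof -
    have "G ** A ** B ** Ginv = G ** A ** Ginv ** G ** B ** Ginv" by (simp add: r1)
    also have "\<dots> = transpose A ** transpose B"
      by (simp add: gbg' gag mm_neg_l mm_neg_r)
    finally show ?thesis .
  qed
  have e2: "G ** A ** (A ** B ** A) ** Ginv = - (transpose B ** transpose A)"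
  proof -
    have "G ** A ** (A ** B ** A) ** Ginv = - (G ** B ** Ginv ** G ** A ** Ginv)"
      by (simp add: matrix_mul_assoc r3 r1 mm_neg_l)
    also have "\<dots> = - (transpose B ** transpose A)"
      by (simp add: gag' gbg mm_neg_l mm_neg_r)
    finally show ?thesis .
  qed
  show "transpose (G ** A) ** (B + A ** B ** A) ** Ginv = transpose (A ** B - B ** A)"
    unfolding tGA by (simp add: mm_simps e1[unfolded matrix_mul_assoc] e2[unfolded matrix_mul_assoc] matrix_mul_assoc)
  have e3: "G ** A ** Ginv ** transpose (B + A ** B ** A) = - (transpose A ** transpose (B + A ** B ** A))"
    by (simp add: gag mm_neg_l)
  show "G ** A ** transpose Ginv ** transpose (B + A ** B ** A) = transpose (A ** B - B ** A)"
    unfolding gis e3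
    by (simp add: mm_simps matrix_mul_assoc r3 r4 at mm_neg_l)
  have "trace (Ginv ** (G ** A) ** (B + A ** B ** A)) = trace (A ** B) + trace (A ** A ** (B ** A))"
    by (simp add: matrix_mul_assoc r1 gl mm_add_r trace_add)
  also have "\<dots> = 0" using aa by (simp add: mm_neg_l trace_neg trace_mul_sym[of A B])
  finally show "trace (Ginv ** (G ** A) ** (B + A ** B ** A)) = 0" .
qed


lemma struct_trace:
  fixes G Ginv A B :: "real^4^4" and Gd Ad :: "4 \<Rightarrow> real^4^4" and th :: "real^4"
  assumes gs: "transpose G = G" and gl: "Ginv ** G = mat 1" and gr: "G ** Ginv = mat 1"
    and gis: "transpose Ginv = Ginv"
    and gds: "\<forall>l i j. Gd l $ i $ j = Gd l $ j $ i"
    and aa: "A ** A = - mat 1" and ag: "transpose A ** G ** A = G"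
    and ad: "\<forall>l. Ad l ** A + A ** Ad l = 0"
    and om: "\<forall>l. Gd l ** A + G ** Ad l + transpose A ** Gd l + transpose (Ad l) ** G = 0"
    and nz: "\<forall>i j k. nij A Ad i j k = 0"
    and dd: "\<forall>l j k. wedge12 th (G ** A) l j k = (Gd l ** A + G ** Ad l) $ j $ k
        + (Gd j ** A + G ** Ad j) $ k $ l + (Gd k ** A + G ** Ad k) $ l $ j"
    and bb: "B ** B = - mat 1" and bg: "transpose B ** G ** B = G"
  shows "trace (Ad l ** B) = (transpose (A ** B - B ** A) *v th) $ l
           - trace (Ginv ** Lc Gd l ** A ** B) + trace (A ** (Ginv ** Lc Gd l) ** B)"
proof -
  define T where "T = Tm G Gd A Ad"
  define D where "D = wedge12 th (G ** A)"
  have sk: "\<forall>l. transpose (T l) = - T l"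
    unfolding T_def using Tm_skew[OF gs gds] om by blast
  have ai: "\<forall>l. transpose A ** T l ** A = - T l"
    unfolding T_def using Tm_A[OF aa ag] ad by blast
  have p3: "\<forall>l j k. D l j k = T l $ j $ k + T j $ k $ l + T k $ l $ j"
    unfolding T_def D_def using P3[OF gds dd] by blast
  have n: "\<forall>s i j. Nidx T A s i j = 0"
    unfolding T_def using P4[OF aa ag gds nz] by blast
  define Dm where "Dm = (\<chi> j k. D l j k)"
  have tmat: "2 *\<^sub>R T l = Dm - transpose A ** Dm ** A"
    unfolding vec_eq_iff
  proof (intro allI)
    fix j k
    have "2 * T l $ j $ k = D l j k - (\<Sum>b\<in>UNIV. \<Sum>c\<in>UNIV. D l b c * A$b$j * A$c$k)"
      by (rule KN[OF sk ai aa p3 n])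
    thus "(2 *\<^sub>R T l) $ j $ k = (Dm - transpose A ** Dm ** A) $ j $ k"
      by (simp add: PtMP Dm_def)
  qed
  obtain m1 m2 m3 m4 where ids:
    "transpose (G ** A) ** (B + A ** B ** A) ** Ginv = transpose (A ** B - B ** A)"
    "G ** A ** transpose Ginv ** transpose (B + A ** B ** A) = transpose (A ** B - B ** A)"
    "trace (Ginv ** (G ** A) ** (B + A ** B ** A)) = 0"
    "Ginv ** transpose A = - (A ** Ginv)"
    using mat_ids[OF gs gl gr gis aa ag bb bg] by blast
  have "2 * trace (Ginv ** T l ** B) = trace (Ginv ** (2 *\<^sub>R T l) ** B)"
    by (simp add: mm_scale_r mm_scale_l trace_scale)
  also have "\<dots> = trace (Ginv ** Dm ** B) - trace (Ginv ** transpose A ** Dm ** A ** B)"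
    unfolding tmat by (simp add: mm_diff_r mm_diff_l trace_sub matrix_mul_assoc)
  also have "trace (Ginv ** transpose A ** Dm ** A ** B) = - trace (A ** (Ginv ** Dm ** A ** B))"
    unfolding ids(4) by (simp add: mm_neg_l trace_neg matrix_mul_assoc)
  also have "trace (A ** (Ginv ** Dm ** A ** B)) = trace (Ginv ** Dm ** (A ** B ** A))"
    using trace_mul_sym[of A "Ginv ** Dm ** A ** B"] by (simp add: matrix_mul_assoc)
  also have "trace (Ginv ** Dm ** B) - - trace (Ginv ** Dm ** (A ** B ** A))
      = trace (Ginv ** Dm ** (B + A ** B ** A))"
    by (simp add: mm_add_r trace_add)
  also have "\<dots> = 2 * (transpose (A ** B - B ** A) *v th) $ l"
    unfolding Dm_def D_def trace_wedge ids(1,2,3) by simp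
  finally have tr1: "trace (Ginv ** T l ** B) = (transpose (A ** B - B ** A) *v th) $ l" by simp
  have link: "Ginv ** T l = Ad l + Ginv ** Lc Gd l ** A - A ** (Ginv ** Lc Gd l)"
  proof -
    have "Ginv ** T l = Ginv ** G ** Ad l + Ginv ** Lc Gd l ** A + Ginv ** transpose A ** Lc Gd l"
      by (simp add: T_def Tm_def mm_add_r matrix_mul_assoc)
    thus ?thesis using gl ids(4) by (simp add: mm_neg_l matrix_mul_assoc)
  qed
  have "Ad l = Ginv ** T l - Ginv ** Lc Gd l ** A + A ** (Ginv ** Lc Gd l)"
    using link by simp
  hence "trace (Ad l ** B) = trace (Ginv ** T l ** B) - trace (Ginv ** Lc Gd l ** A ** B)
       + trace (A ** (Ginv ** Lc Gd l) ** B)"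
    by (simp add: mm_add_l mm_diff_l trace_add trace_sub)
  thus ?thesis using tr1 by simp
qed


lemma vm_neg: "(- x) v* (P::real^4^4) = - (x v* P)"
  by (simp add: vec_eq_iff vector_matrix_mult_def sum_negf)

lemma pw4D:
  fixes G I J :: "real^4^4"
  assumes gs: "transpose G = G" and gp: "\<forall>v. v \<noteq> 0 \<longrightarrow> v \<bullet> (G *v v) > 0"
    and ii: "I ** I = - mat 1" and ig: "transpose I ** G ** I = G"
    and jj: "J ** J = - mat 1" and jg: "transpose J ** G ** J = G"
    and nd: "det (I ** J - J ** I) \<noteq> 0"
  shows "I ** J + J ** I = (trace (I ** J) / 2) *\<^sub>R mat 1"
    and "pb (I ** J) (wedge12 th (G ** I)) = wedge12 (-th) (G ** J)"
proof -
  obtain P where pgp: "transpose P ** G ** P = mat 1" and ip: "I ** P = P ** I0"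
    using normalize[OF gs gp ii ig] by blast
  define Q where "Q = transpose P ** G"
  have qp: "Q ** P = mat 1" using pgp by (simp add: Q_def)
  hence pq: "P ** Q = mat 1" using matrix_left_right_inverse by blast
  have I0: "I0 = Q ** I ** P"
    by (metis ip matrix_mul_assoc matrix_mul_lid qp)
  define J' where "J' = Q ** J ** P"
  have jp: "J ** P = P ** J'"
    by (metis J'_def matrix_mul_assoc matrix_mul_lid pq)
  have "transpose Q = G ** P" using gs by (simp add: Q_def matrix_transpose_mul)
  have "transpose J' ** J' = transpose P ** (transpose J ** (G ** (P ** Q)) ** J) ** P"
    using \<open>transpose Q = G ** P\<close>
    by (simp add: J'_def matrix_transpose_mul matrix_mul_assoc)
  also have "\<dots> = mat 1" using pq jg pgp by (simp add: matrix_mul_assoc)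
  finally have j1: "transpose J' ** J' = mat 1" .
  have j2: "J' ** J' = - mat 1"
  proof -
    have "J' ** J' = Q ** J ** (P ** Q) ** J ** P" by (simp add: J'_def matrix_mul_assoc)
    also have "\<dots> = - (Q ** P)" using pq jj by (simp add: matrix_mul_assoc[symmetric] mm_neg_r mm_neg_l)
    finally show ?thesis using qp by simp
  qed
  have comm: "I0 ** J' - J' ** I0 = Q ** (I ** J - J ** I) ** P"
  proof -
    have "I0 ** J' = Q ** (I ** J) ** P" unfolding I0 J'_def
      by (metis (no_types, lifting) matrix_mul_assoc matrix_mul_lid pq)
    moreover have "J' ** I0 = Q ** (J ** I) ** P" unfolding I0 J'_def
      by (metis (no_types, lifting) matrix_mul_assoc matrix_mul_lid pq)
    ultimately show ?thesis by (simp add: mm_diff_r mm_diff_l)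
  qed
  have dqp: "det Q * det P = 1" using qp by (metis det_I det_mul)
  have nd': "det (I0 ** J' - J' ** I0) \<noteq> 0"
    using nd dqp unfolding comm by (simp add: det_mul) (metis mult_eq_0_iff zero_neq_one)
  obtain a b c where jn: "J' = Jn a b c" and abc: "a*a+b*b+c*c = 1"
    using norm_J[OF j1 j2 nd'] by (auto simp: power2_eq_square)
  have anti: "I0 ** J' + J' ** I0 = Q ** (I ** J + J ** I) ** P"
  proof -
    have "I0 ** J' = Q ** (I ** J) ** P" unfolding I0 J'_def
      by (metis (no_types, lifting) matrix_mul_assoc matrix_mul_lid pq)
    moreover have "J' ** I0 = Q ** (J ** I) ** P" unfolding I0 J'_def
      by (metis (no_types, lifting) matrix_mul_assoc matrix_mul_lid pq)
    ultimately show ?thesis by (simp add: mm_add_r mm_add_l)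
  qed
  have tr: "trace (I ** J) = 4 * a"
  proof -
    have "trace (I0 ** J') = trace (Q ** (I ** J) ** P)" unfolding I0 J'_def
      by (metis (no_types, lifting) matrix_mul_assoc matrix_mul_lid pq)
    also have "\<dots> = trace (P ** Q ** (I ** J))" by (metis trace_mul_sym matrix_mul_assoc)
    finally show ?thesis using pq jn trn by simp
  qed
  have "I ** J + J ** I = P ** (I0 ** J' + J' ** I0) ** Q"
    unfolding anti by (simp add: matrix_mul_assoc pq) (simp add: matrix_mul_assoc[symmetric] pq)
  also have "\<dots> = (2*a) *\<^sub>R mat 1" unfolding jn F2n by (simp add: mm_scale_r mm_scale_l pq)
  finally show "I ** J + J ** I = (trace (I ** J) / 2) *\<^sub>R mat 1" using tr by simp
  define th' where "th' = th v* P"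
  have inj: "pb Q (pb P X) = X" for X using pb_comp[of Q P X] pb_id pq by simp
  have "pb P (pb (I ** J) (wedge12 th (G ** I))) = pb (P ** (I0 ** J')) (wedge12 th (G ** I))"
    using pb_comp ip jp by (metis matrix_mul_assoc)
  also have "\<dots> = pb (I0 ** J') (pb P (wedge12 th (G ** I)))" by (simp add: pb_comp)
  also have "pb P (wedge12 th (G ** I)) = wedge12 th' I0"
  proof -
    have "transpose P ** (G ** I) ** P = transpose P ** G ** P ** I0" by (metis ip matrix_mul_assoc)
    thus ?thesis using pgp by (simp add: fun_eq_iff pb_wedge th'_def)
  qed
  also have "pb (I0 ** J') (wedge12 th' I0) = wedge12 (-th') J'"
    using F1n[OF abc, of th'] jn by (simp add: fun_eq_iff)
  also have "wedge12 (-th') J' = pb P (wedge12 (-th) (G ** J))"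
  proof -
    have "transpose P ** (G ** J) ** P = transpose P ** G ** P ** J'" by (metis jp matrix_mul_assoc)
    thus ?thesis using pgp by (simp add: fun_eq_iff pb_wedge th'_def vm_neg)
  qed
  finally have "pb P (pb (I ** J) (wedge12 th (G ** I))) = pb P (wedge12 (-th) (G ** J))" .
  thus "pb (I ** J) (wedge12 th (G ** I)) = wedge12 (-th) (G ** J)"
    by (metis inj)
qed


lemma pd_eq: "(f has_derivative f') (at x) \<Longrightarrow> pd f l x = f' (axis l 1)"
  unfolding pd_def using frechet_derivative_at by metis

lemma fd_works: "f differentiable (at x) \<Longrightarrow> (f has_derivative frechet_derivative f (at x)) (at x)"
  using frechet_derivative_works by blast

lemma pd_add:
  assumes "f differentiable (at x)" "h differentiable (at x)"
  shows "pd (\<lambda>y. f y + h y) l x = pd f l x + pd h l x"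
  using pd_eq[OF has_derivative_add[OF fd_works[OF assms(1)] fd_works[OF assms(2)]]]
  by (simp add: pd_def)

lemma pd_mult:
  assumes "f differentiable (at x)" "h differentiable (at x)"
  shows "pd (\<lambda>y. f y * h y) l x = pd f l x * h x + f x * pd h l x"
  using pd_eq[OF has_derivative_mult[OF fd_works[OF assms(1)] fd_works[OF assms(2)]]]
  by (simp add: pd_def algebra_simps)

lemma pd_sum:
  assumes "finite S" "\<forall>k\<in>S. f k differentiable (at x)"
  shows "pd (\<lambda>y. \<Sum>k\<in>S. f k y) l x = (\<Sum>k\<in>S. pd (f k) l x)"
proof -
  have "((\<lambda>y. \<Sum>k\<in>S. f k y) has_derivative (\<lambda>v. \<Sum>k\<in>S. frechet_derivative (f k) (at x) v)) (at x)"
    using assms by (intro has_derivative_sum) (auto intro: fd_works)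
  from pd_eq[OF this] show ?thesis by (simp add: pd_def)
qed

lemma pd_const: "pd (\<lambda>y. c) l x = 0"
  using pd_eq[OF has_derivative_const] by simp

lemma pd_local:
  assumes "open U" "x \<in> U" "\<forall>y\<in>U. f y = h y" "h differentiable (at x)"
  shows "pd f l x = pd h l x"
proof -
  have "(f has_derivative frechet_derivative h (at x)) (at x)"
    using has_derivative_transform_within_open[OF fd_works[OF assms(4)] assms(1,2)] assms(3)
    by auto
  from pd_eq[OF this] show ?thesis by (simp add: pd_def)
qed

definition mpd :: "(real^4 \<Rightarrow> real^4^4) \<Rightarrow> real^4 \<Rightarrow> 4 \<Rightarrow> real^4^4" where
  "mpd A x l = (\<chi> i j. pd (\<lambda>y. A y $ i $ j) l x)"

definition mdiff :: "(real^4 \<Rightarrow> real^4^4) \<Rightarrow> real^4 \<Rightarrow> bool" where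
  "mdiff A x \<longleftrightarrow> (\<forall>i j. (\<lambda>y. A y $ i $ j) differentiable (at x))"

lemma mdiff_mm: "mdiff A x \<Longrightarrow> mdiff B x \<Longrightarrow> mdiff (\<lambda>y. A y ** B y) x"
  unfolding mdiff_def matrix_matrix_mult_def
  by (auto intro!: differentiable_sum differentiable_mult)

lemma mpd_mm:
  assumes "mdiff A x" "mdiff B x"
  shows "mpd (\<lambda>y. A y ** B y) x l = mpd A x l ** B x + A x ** mpd B x l"
proof -
  have "pd (\<lambda>y. (A y ** B y) $ i $ j) l x = (mpd A x l ** B x + A x ** mpd B x l) $ i $ j" for i j
  proof -
    have "pd (\<lambda>y. (A y ** B y) $ i $ j) l x = pd (\<lambda>y. \<Sum>k\<in>UNIV. A y $ i $ k * B y $ k $ j) l x"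
      by (simp add: matrix_matrix_mult_def)
    also have "\<dots> = (\<Sum>k\<in>UNIV. pd (\<lambda>y. A y $ i $ k * B y $ k $ j) l x)"
      using assms unfolding mdiff_def by (intro pd_sum) (auto intro: differentiable_mult)
    also have "\<dots> = (\<Sum>k\<in>UNIV. pd (\<lambda>y. A y $ i $ k) l x * B x $ k $ j + A x $ i $ k * pd (\<lambda>y. B y $ k $ j) l x)"
      using assms unfolding mdiff_def by (intro sum.cong refl pd_mult) auto
    finally show ?thesis
      by (simp add: mpd_def matrix_matrix_mult_def sum.distrib)
  qed
  thus ?thesis by (simp add: vec_eq_iff mpd_def)
qed

lemma mdiff_tr: "mdiff A x \<Longrightarrow> mdiff (\<lambda>y. transpose (A y)) x"
  by (simp add: mdiff_def transpose_def)

lemma mpd_tr: "mpd (\<lambda>y. transpose (A y)) x l = transpose (mpd A x l)"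
  by (simp add: mpd_def transpose_def)

lemma mdiff_add: "mdiff A x \<Longrightarrow> mdiff B x \<Longrightarrow> mdiff (\<lambda>y. A y + B y) x"
  unfolding mdiff_def by (auto intro!: differentiable_add)

lemma mpd_add:
  assumes "mdiff A x" "mdiff B x"
  shows "mpd (\<lambda>y. A y + B y) x l = mpd A x l + mpd B x l"
  using assms unfolding mdiff_def by (simp add: vec_eq_iff mpd_def pd_add)

lemma mpd_local:
  assumes "open U" "x \<in> U" "\<forall>y\<in>U. A y = B y" "mdiff B x"
  shows "mpd A x l = mpd B x l"
  using assms unfolding mdiff_def mpd_def vec_eq_iff
  by (auto intro!: pd_local[OF assms(1,2)])

lemma mpd_const: "mpd (\<lambda>y. C) x l = 0"
  by (simp add: mpd_def vec_eq_iff pd_const)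

lemma smooth_mdiff: "smooth_mat U A \<Longrightarrow> x \<in> U \<Longrightarrow> mdiff A x"
  unfolding smooth_mat_def smooth_fun_def mdiff_def
  by (metis pds.simps(1))


lemma skew_quad: fixes S :: "real^4^4" assumes "transpose S = - S" shows "v \<bullet> (S *v v) = 0"
proof -
  have "v \<bullet> (S *v v) = (v v* S) \<bullet> v" by (simp add: dot_lmul_matrix)
  also have "v v* S = transpose S *v v" by simp
  also have "\<dots> = - (S *v v)" using assms by (simp add: mv_neg_l)
  finally have "v \<bullet> (S *v v) = - ((S *v v) \<bullet> v)" by simp
  thus ?thesis by (simp add: inner_commute)
qed

lemma final_alg:
  fixes Ginv I J :: "real^4^4" and th :: "real^4" and c :: real
  assumes gis: "transpose Ginv = Ginv"
    and gi: "Ginv ** transpose I = - (I ** Ginv)" and gj: "Ginv ** transpose J = - (J ** Ginv)"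
    and ii: "I ** I = - mat 1" and jj: "J ** J = - mat 1"
    and f2: "I ** J + J ** I = c *\<^sub>R mat 1"
    and nd: "det (I ** J - J ** I) \<noteq> 0"
  shows "((1/2) *\<^sub>R (transpose (I ** J - J ** I) *v th)) \<bullet> (Ginv *v th) = 0"
    and "((1/2) *\<^sub>R (transpose (I ** J - J ** I) *v th)) \<bullet> (Ginv *v ((1/2) *\<^sub>R (transpose (I ** J - J ** I) *v th)))
         = (1 - c\<^sup>2/4) * (th \<bullet> (Ginv *v th))"
    and "1 - c\<^sup>2/4 \<noteq> 0"
proof -
  define K where "K = I ** J - J ** I"
  have ri: "X ** I ** I = - X" for X :: "real^4^4" by (metis ii matrix_mul_assoc matrix_mul_rid mm_neg_r)
  have rj: "X ** J ** J = - X" for X :: "real^4^4" by (metis jj matrix_mul_assoc matrix_mul_rid mm_neg_r)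
  have gi': "X ** Ginv ** transpose I = - (X ** I ** Ginv)" for X :: "real^4^4"
    by (metis gi matrix_mul_assoc mm_neg_r)
  have gj': "X ** Ginv ** transpose J = - (X ** J ** Ginv)" for X :: "real^4^4"
    by (metis gj matrix_mul_assoc mm_neg_r)
  have gk: "Ginv ** transpose K = - (K ** Ginv)"
    unfolding K_def
    by (simp add: matrix_transpose_mul mm_simps matrix_mul_assoc gi gj gi' gj')
  have skew: "transpose (K ** Ginv) = - (K ** Ginv)"
    using gk gis by (simp add: matrix_transpose_mul)
  have kk: "K ** K = (c\<^sup>2 - 4) *\<^sub>R mat 1"
  proof -
    have e1: "K ** K = I ** J ** I ** J + J ** I ** J ** I - 2 *\<^sub>R mat 1"
      unfolding K_def
      by (simp add: mm_simps matrix_mul_assoc ri rj ii jj scaleR_2 algebra_simps)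
    have e2: "(I ** J + J ** I) ** (I ** J + J ** I) = I ** J ** I ** J + J ** I ** J ** I + 2 *\<^sub>R mat 1"
      by (simp add: mm_simps matrix_mul_assoc ri rj ii jj scaleR_2 algebra_simps)
    have "(I ** J + J ** I) ** (I ** J + J ** I) = (c\<^sup>2) *\<^sub>R mat 1"
      unfolding f2 by (simp add: mm_scale_l mm_scale_r power2_eq_square)
    with e2 have y: "I ** J ** I ** J + J ** I ** J ** I = c\<^sup>2 *\<^sub>R mat 1 - 2 *\<^sub>R mat 1"
      by (simp add: algebra_simps)
    have "(c\<^sup>2 - 4) *\<^sub>R (mat 1::real^4^4) = c\<^sup>2 *\<^sub>R mat 1 - 2 *\<^sub>R mat 1 - 2 *\<^sub>R mat 1"
      by (simp add: scaleR_diff_left[symmetric])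
    with e1 y show ?thesis by simp
  qed
  have dA: "(transpose K *v th) \<bullet> z = th \<bullet> (K *v z)" for z
    using dot_Av[of "transpose K" th z] by (simp only: transpose_transpose)
  show "((1/2) *\<^sub>R (transpose (I ** J - J ** I) *v th)) \<bullet> (Ginv *v th) = 0"
    unfolding K_def[symmetric]
    using skew_quad[OF skew, of th] by (simp add: dA dot_lmul_matrix matrix_vector_mul_assoc)
  have kg: "(K ** Ginv) *v (th v* K) = (K ** Ginv ** transpose K) *v th"
    by (metis matrix_vector_mul_assoc transpose_matrix_vector)
  have "((1/2) *\<^sub>R (transpose K *v th)) \<bullet> (Ginv *v ((1/2) *\<^sub>R (transpose K *v th)))
      = (1/4) * (th \<bullet> ((K ** Ginv ** transpose K) *v th))"
    by (simp add: dA dot_lmul_matrix matrix_vector_mult_scaleR matrix_vector_mul_assoc kg)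
  also have "K ** Ginv ** transpose K = (4 - c\<^sup>2) *\<^sub>R Ginv"
  proof -
    have "K ** Ginv ** transpose K = - (K ** K ** Ginv)"
      by (metis gk matrix_mul_assoc mm_neg_r)
    also have "K ** K ** Ginv = (c\<^sup>2 - 4) *\<^sub>R Ginv" using kk by (simp add: mm_scale_l)
    finally show ?thesis by (metis minus_diff_eq scaleR_minus_left)
  qed
  finally show "((1/2) *\<^sub>R (transpose (I ** J - J ** I) *v th)) \<bullet> (Ginv *v ((1/2) *\<^sub>R (transpose (I ** J - J ** I) *v th)))
         = (1 - c\<^sup>2/4) * (th \<bullet> (Ginv *v th))"
    unfolding K_def[symmetric] by (simp add: mv_scale_l algebra_simps)
  show "1 - c\<^sup>2/4 \<noteq> 0"
  proof
    assume "1 - c\<^sup>2/4 = 0"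
    hence "c\<^sup>2 - 4 = 0" by simp
    hence "K ** K = 0" using kk by simp
    hence "det K * det K = 0" by (metis det_mul det_0 mat_0)
    thus False using nd by (simp add: K_def)
  qed
qed


lemma pb_negP: "pb (- P) T = (\<lambda>i j k. - pb P T i j k)"
  by (simp add: fun_eq_iff pb_def sum_negf[symmetric])

lemma pb_negT: "pb P (\<lambda>i j k. - T i j k) = (\<lambda>i j k. - pb P T i j k)"
  by (simp add: fun_eq_iff pb_def sum_negf[symmetric])

lemma dc2_pb: "dc2 A om x i j k = - pb (A x) (d2 om x) i j k"
  by (simp add: dc2_def pb_def)

lemma d2_ff:
  assumes "mdiff g x" "mdiff A x"
  shows "d2 (fund_form g A) x l j k = (mpd g x l ** A x + g x ** mpd A x l) $ j $ k
     + (mpd g x j ** A x + g x ** mpd A x j) $ k $ l + (mpd g x k ** A x + g x ** mpd A x k) $ l $ j"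
proof -
  have "pd (\<lambda>y. fund_form g A y $ a $ b) c x = (mpd g x c ** A x + g x ** mpd A x c) $ a $ b" for a b c
  proof -
    have "pd (\<lambda>y. fund_form g A y $ a $ b) c x = mpd (\<lambda>y. g y ** A y) x c $ a $ b"
      by (simp add: mpd_def fund_form_def)
    thus ?thesis using mpd_mm[OF assms] by simp
  qed
  thus ?thesis by (simp add: d2_def)
qed

lemma mdiff_const: "mdiff (\<lambda>y. C) x"
  by (simp add: mdiff_def)

lemma gd_sym:
  assumes "open U" "x \<in> U" "smooth_mat U g" "\<forall>y\<in>U. transpose (g y) = g y"
  shows "\<forall>l i j. mpd g x l $ i $ j = mpd g x l $ j $ i"
proof (intro allI)
  fix l i j
  have md: "mdiff g x" using smooth_mdiff assms by blast
  have "mpd g x l = mpd (\<lambda>y. transpose (g y)) x l"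
    using mpd_local[OF assms(1,2), of g "\<lambda>y. transpose (g y)"] assms(4) mdiff_tr[OF md] by auto
  also have "\<dots> = transpose (mpd g x l)" by (rule mpd_tr)
  finally have e: "mpd g x l = transpose (mpd g x l)" .
  have "mpd g x l $ i $ j = transpose (mpd g x l) $ i $ j"
    using arg_cong[OF e, of "\<lambda>M. M $ i $ j"] by simp
  thus "mpd g x l $ i $ j = mpd g x l $ j $ i" by (simp add: transpose_def)
qed

lemma struct_facts:
  assumes U: "open U" "x \<in> U" and sg: "smooth_mat U g"
    and gsym: "\<forall>y\<in>U. transpose (g y) = g y"
    and cs: "complex_structure U A" and he: "hermitian U g A"
  shows "A x ** A x = - mat 1"
    and "transpose (A x) ** g x ** A x = g x"
    and "\<forall>l. mpd A x l ** A x + A x ** mpd A x l = 0"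
    and "\<forall>l. mpd g x l ** A x + g x ** mpd A x l + transpose (A x) ** mpd g x l + transpose (mpd A x l) ** g x = 0"
    and "\<forall>i j k. nij (A x) (mpd A x) i j k = 0"
proof -
  have sa: "smooth_mat U A" and aa: "\<forall>y\<in>U. A y ** A y = - mat 1"
    and nj: "\<forall>y\<in>U. \<forall>i j k. nijenhuis A y i j k = 0"
    using cs unfolding complex_structure_def by auto
  have ag: "\<forall>y\<in>U. transpose (A y) ** g y ** A y = g y" using he unfolding hermitian_def by auto
  have mg: "mdiff g x" and ma: "mdiff A x" using smooth_mdiff U sa sg by auto
  show "A x ** A x = - mat 1" using aa U by auto
  show "transpose (A x) ** g x ** A x = g x" using ag U by auto
  show "\<forall>l. mpd A x l ** A x + A x ** mpd A x l = 0"
  proof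
    fix l
    have "mpd (\<lambda>y. A y ** A y) x l = mpd (\<lambda>y. - mat 1) x l"
      using mpd_local[OF U, of "\<lambda>y. A y ** A y" "\<lambda>y. - mat 1"] aa mdiff_const by auto
    thus "mpd A x l ** A x + A x ** mpd A x l = 0"
      using mpd_mm[OF ma ma] mpd_const by simp
  qed
  show "\<forall>l. mpd g x l ** A x + g x ** mpd A x l + transpose (A x) ** mpd g x l + transpose (mpd A x l) ** g x = 0"
  proof
    fix l
    have z: "\<forall>y\<in>U. g y ** A y + transpose (A y) ** g y = 0"
    proof
      fix y assume "y \<in> U"
      have "transpose (A y) ** g y = - (g y ** A y)"
        by (rule AtG) (use aa ag \<open>y \<in> U\<close> in auto)
      thus "g y ** A y + transpose (A y) ** g y = 0" by simp
    qed
    have "mpd (\<lambda>y. g y ** A y + transpose (A y) ** g y) x l = mpd (\<lambda>y. 0) x l"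
      using mpd_local[OF U, of "\<lambda>y. g y ** A y + transpose (A y) ** g y" "\<lambda>y. 0"] z mdiff_const by auto
    also have "\<dots> = 0" by (rule mpd_const)
    finally have "mpd (\<lambda>y. g y ** A y + transpose (A y) ** g y) x l = 0" .
    moreover have "mpd (\<lambda>y. g y ** A y + transpose (A y) ** g y) x l
        = mpd g x l ** A x + g x ** mpd A x l + (transpose (mpd A x l) ** g x + transpose (A x) ** mpd g x l)"
      using mpd_add[OF mdiff_mm[OF mg ma] mdiff_mm[OF mdiff_tr[OF ma] mg]]
        mpd_mm[OF mg ma] mpd_mm[OF mdiff_tr[OF ma] mg] mpd_tr by simp
    ultimately show "mpd g x l ** A x + g x ** mpd A x l + transpose (A x) ** mpd g x l + transpose (mpd A x l) ** g x = 0"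
      by (simp add: algebra_simps)
  qed
  show "\<forall>i j k. nij (A x) (mpd A x) i j k = 0"
    using nj U by (simp add: nijenhuis_def nij_def mpd_def)
qed


lemma ginv_facts:
  fixes G :: "real^4^4"
  assumes gs: "transpose G = G" and gp: "\<forall>v. v \<noteq> 0 \<longrightarrow> v \<bullet> (G *v v) > 0"
  shows "matrix_inv G ** G = mat 1" "G ** matrix_inv G = mat 1" "transpose (matrix_inv G) = matrix_inv G"
proof -
  have "inj ((*v) G)"
  proof (rule injI)
    fix v w assume "G *v v = G *v w"
    hence "G *v (v - w) = 0" by (simp add: matrix_vector_mult_diff_distrib)
    hence "(v - w) \<bullet> (G *v (v - w)) = 0" by simp
    thus "v = w" using gp by (metis less_irrefl right_minus_eq)
  qed
  then obtain B where "B ** G = mat 1" using matrix_left_invertible_injective by blast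
  hence inv: "invertible G" using invertible_left_inverse by blast
  have both: "G ** matrix_inv G = mat 1 \<and> matrix_inv G ** G = mat 1"
    using inv unfolding invertible_def matrix_inv_def by (rule someI_ex)
  thus l: "matrix_inv G ** G = mat 1" and r: "G ** matrix_inv G = mat 1" by auto
  have "transpose (matrix_inv G) ** G = mat 1"
    using r gs by (metis matrix_transpose_mul transpose_mat)
  hence "transpose (matrix_inv G) = transpose (matrix_inv G) ** (G ** matrix_inv G)"
    using r by simp
  also have "\<dots> = matrix_inv G"
    using \<open>transpose (matrix_inv G) ** G = mat 1\<close> by (simp add: matrix_mul_assoc)
  finally show "transpose (matrix_inv G) = matrix_inv G" .
qed

lemma pd_divc:
  assumes "f differentiable (at x)"
  shows "pd (\<lambda>y. f y / c) l x = pd f l x / c"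
  using pd_mult[OF assms differentiable_const[of "1/c"], of l] pd_const[of "1/c" l x]
  by (simp add: divide_inverse)

lemma angle_pd:
  assumes "mdiff I x" "mdiff J x"
  shows "pd (angle I J) l x = trace (mpd I x l ** J x + I x ** mpd J x l) / 4"
proof -
  have md: "\<forall>i j. (\<lambda>y. (I y ** J y) $ i $ j) differentiable (at x)"
    using mdiff_mm[OF assms] unfolding mdiff_def .
  have "angle I J = (\<lambda>y. \<Sum>i\<in>UNIV. (I y ** J y) $ i $ i / 4)"
    by (simp add: fun_eq_iff angle_def trace_def sum_divide_distrib)
  hence "pd (angle I J) l x = (\<Sum>i\<in>UNIV. pd (\<lambda>y. (I y ** J y) $ i $ i / 4) l x)"
    using md by (simp add: pd_sum differentiable_divide)
  also have "\<dots> = (\<Sum>i\<in>UNIV. mpd (\<lambda>y. I y ** J y) x l $ i $ i / 4)"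
    using md by (intro sum.cong refl) (simp add: pd_divc mpd_def)
  also have "\<dots> = trace (mpd I x l ** J x + I x ** mpd J x l) / 4"
    by (simp add: mpd_mm[OF assms] trace_def sum_divide_distrib)
  finally show ?thesis .
qed

theorem lemma3p12:
  fixes U :: "(real^4) set"
    and g I J :: "real^4 \<Rightarrow> real^4^4"
    and theta :: "real^4 \<Rightarrow> real^4"
  assumes "open U"
    and "generalized_kaehler U g I J"
    and "nondegenerate U I J"
    and "\<forall>x\<in>U. \<forall>i j k. d2 (fund_form g I) x i j k = wedge12 (theta x) (fund_form g I x) i j k"
    and "x \<in> U"
  shows "inner_g (g x) (dfun (angle I J) x) (theta x) = 0 \<and>
         inner_g (g x) (theta x) (theta x)
           = inner_g (g x) (dfun (angle I J) x) (dfun (angle I J) x) / (1 - (angle I J x)\<^sup>2)"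
proof -
  note U = assms(1,5)
  have rm: "riemannian_metric U g" and csI: "complex_structure U I" and csJ: "complex_structure U J"
    and hI: "hermitian U g I" and hJ: "hermitian U g J"
    using assms(2) unfolding generalized_kaehler_def by auto
  obtain H where HI: "\<forall>x\<in>U. \<forall>i j k. dc2 I (fund_form g I) x i j k = H x i j k"
    and HJ: "\<forall>x\<in>U. \<forall>i j k. H x i j k = - dc2 J (fund_form g J) x i j k"
    using assms(2) unfolding generalized_kaehler_def by auto
  have sg: "smooth_mat U g" and gsymU: "\<forall>y\<in>U. transpose (g y) = g y"
    and gpU: "\<forall>y\<in>U. \<forall>v. v \<noteq> 0 \<longrightarrow> v \<bullet> (g y *v v) > 0"
    using rm unfolding riemannian_metric_def by auto
  have sI: "smooth_mat U I" and sJ: "smooth_mat U J"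
    using csI csJ unfolding complex_structure_def by auto
  have mg: "mdiff g x" and mI: "mdiff I x" and mJ: "mdiff J x"
    using smooth_mdiff U sg sI sJ by auto
  define G where "G = g x"
  define Gd where "Gd = mpd g x"
  define Ii where "Ii = I x"
  define Jj where "Jj = J x"
  define Id where "Id = mpd I x"
  define Jd where "Jd = mpd J x"
  define th where "th = theta x"
  define Ginv where "Ginv = matrix_inv G"
  have gs: "transpose G = G" using gsymU U by (simp add: G_def)
  have gp: "\<forall>v. v \<noteq> 0 \<longrightarrow> v \<bullet> (G *v v) > 0" using gpU U by (simp add: G_def)
  have gl: "Ginv ** G = mat 1" and gr: "G ** Ginv = mat 1" and gis: "transpose Ginv = Ginv"
    using ginv_facts[OF gs gp] by (simp_all add: Ginv_def)
  have gds: "\<forall>l i j. Gd l $ i $ j = Gd l $ j $ i"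
    unfolding Gd_def by (rule gd_sym[OF U sg gsymU])
  note fI = struct_facts[OF U sg gsymU csI hI, folded G_def Gd_def Ii_def Id_def]
  note fJ = struct_facts[OF U sg gsymU csJ hJ, folded G_def Gd_def Jj_def Jd_def]
  have nd: "det (Ii ** Jj - Jj ** Ii) \<noteq> 0"
    using assms(3) U unfolding nondegenerate_def by (simp add: Ii_def Jj_def)
  note pw = pw4D[OF gs gp fI(1,2) fJ(1,2) nd]
  have DI: "d2 (fund_form g I) x = wedge12 th (G ** Ii)"
    using assms(4) U by (simp add: fun_eq_iff th_def G_def Ii_def fund_form_def)
  have ddI: "\<forall>l j k. wedge12 th (G ** Ii) l j k = (Gd l ** Ii + G ** Id l) $ j $ k
        + (Gd j ** Ii + G ** Id j) $ k $ l + (Gd k ** Ii + G ** Id k) $ l $ j"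
    using d2_ff[OF mg mI] DI by (simp add: G_def Gd_def Ii_def Id_def)
  have r0: "- pb Ii (d2 (fund_form g I) x) i j k = pb Jj (d2 (fund_form g J) x) i j k" for i j k
    using HI HJ U by (simp add: dc2_pb Ii_def Jj_def)
  have rel: "pb Ii (d2 (fund_form g I) x) = (\<lambda>i j k. - pb Jj (d2 (fund_form g J) x) i j k)"
    by (rule ext)+ (metis r0 minus_minus)
  have DJ: "d2 (fund_form g J) x = wedge12 (- th) (G ** Jj)"
  proof -
    have "pb Jj (pb Jj (d2 (fund_form g J) x)) = pb (- mat 1) (d2 (fund_form g J) x)"
      by (simp add: pb_comp fJ(1))
    also have "\<dots> = (\<lambda>i j k. - d2 (fund_form g J) x i j k)"
      by (simp add: pb_negP pb_id)
    finally have "d2 (fund_form g J) x = (\<lambda>i j k. - pb Jj (pb Jj (d2 (fund_form g J) x)) i j k)"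
      by (simp add: fun_eq_iff)
    also have "(\<lambda>i j k. - pb Jj (pb Jj (d2 (fund_form g J) x)) i j k) = pb Jj (pb Ii (d2 (fund_form g I) x))"
      unfolding rel pb_negT by simp
    also have "\<dots> = pb (Ii ** Jj) (wedge12 th (G ** Ii))" by (simp add: pb_comp DI)
    also have "\<dots> = wedge12 (- th) (G ** Jj)" by (rule pw(2))
    finally show ?thesis .
  qed
  have ddJ: "\<forall>l j k. wedge12 (- th) (G ** Jj) l j k = (Gd l ** Jj + G ** Jd l) $ j $ k
        + (Gd j ** Jj + G ** Jd j) $ k $ l + (Gd k ** Jj + G ** Jd k) $ l $ j"
    using d2_ff[OF mg mJ] DJ by (simp add: G_def Gd_def Jj_def Jd_def)
  have trI: "trace (Id l ** Jj) = (transpose (Ii ** Jj - Jj ** Ii) *v th) $ l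
           - trace (Ginv ** Lc Gd l ** Ii ** Jj) + trace (Ii ** (Ginv ** Lc Gd l) ** Jj)" for l
    by (rule struct_trace[OF gs gl gr gis gds fI(1,2,3,4,5) ddI fJ(1,2)])
  have trJ: "trace (Jd l ** Ii) = (transpose (Jj ** Ii - Ii ** Jj) *v (- th)) $ l
           - trace (Ginv ** Lc Gd l ** Jj ** Ii) + trace (Jj ** (Ginv ** Lc Gd l) ** Ii)" for l
    by (rule struct_trace[OF gs gl gr gis gds fJ(1,2,3,4,5) ddJ fI(1,2)])
  have dp: "dfun (angle I J) x = (1/2) *\<^sub>R (transpose (Ii ** Jj - Jj ** Ii) *v th)"
  proof -
    have "dfun (angle I J) x $ l = ((1/2) *\<^sub>R (transpose (Ii ** Jj - Jj ** Ii) *v th)) $ l" for l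
    proof -
      define C where "C = Ginv ** Lc Gd l"
      have c1: "trace (Ii ** C ** Jj) = trace (C ** Jj ** Ii)"
        using trace_mul_sym[of Ii "C ** Jj"] by (simp add: matrix_mul_assoc)
      have c2: "trace (Jj ** C ** Ii) = trace (C ** Ii ** Jj)"
        using trace_mul_sym[of Jj "C ** Ii"] by (simp add: matrix_mul_assoc)
      have c3: "trace (Ii ** Jd l) = trace (Jd l ** Ii)" by (rule trace_mul_sym)
      have e: "(transpose (Jj ** Ii - Ii ** Jj) *v (- th)) = transpose (Ii ** Jj - Jj ** Ii) *v th"
        by (simp add: tr_diff mv_neg_r algebra_simps matrix_vector_mult_diff_rdistrib)
      have "dfun (angle I J) x $ l = trace (Id l ** Jj + Ii ** Jd l) / 4"
        using angle_pd[OF mI mJ] by (simp add: dfun_def Id_def Jd_def Ii_def Jj_def)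
      also have "\<dots> = (trace (Id l ** Jj) + trace (Jd l ** Ii)) / 4"
        by (simp add: trace_add c3)
      also have "\<dots> = (transpose (Ii ** Jj - Jj ** Ii) *v th) $ l / 2"
        unfolding trI trJ e C_def[symmetric] using c1 c2 by simp
      finally show ?thesis by simp
    qed
    thus ?thesis by (simp add: vec_eq_iff)
  qed
  have ang: "angle I J x = trace (Ii ** Jj) / 4" by (simp add: angle_def Ii_def Jj_def)
  have ginvI: "Ginv ** transpose Ii = - (Ii ** Ginv)"
    using mat_ids(4)[OF gs gl gr gis fI(1,2) fJ(1,2)] .
  have ginvJ: "Ginv ** transpose Jj = - (Jj ** Ginv)"
    using mat_ids(4)[OF gs gl gr gis fJ(1,2) fI(1,2)] .
  note fa0 = final_alg[OF gis ginvI ginvJ fI(1) fJ(1) pw(1) nd]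
  note fa = fa0(1)[of th] fa0(2)[of th] fa0(3)
  have cp: "(trace (Ii ** Jj) / 2)\<^sup>2 / 4 = (angle I J x)\<^sup>2"
    unfolding ang by (simp add: power2_eq_square)
  show ?thesis
    unfolding inner_g_def dp
    using fa cp by (simp add: G_def[symmetric] Ginv_def[symmetric] th_def[symmetric] field_simps)
qed


end
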